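(* Let $\Phi\subset N_\mathbb{R}$ be a compact convex domain with non-empty interior, let $\mathcal{F}_\Phi$ be its tropical distance series, $t_\Phi=\max_\Phi \mathcal{F}_\Phi$ its final time, and $\mathcal{K}_\Phi$ its tropical caustic. Let $p$ be a vertex of $\mathcal{K}_\Phi$ which is non-final, i.e. $0<\mathcal{F}_\Phi(p)<t_\Phi$. Then $p$ is a trivalent vertex of $\mathcal{K}_\Phi$, and there exist a natural number $n\geq 1$ and a lattice basis $e_1,e_2$ of $N$ such that, in a small neighbourhood of $p$, $\mathcal{K}_\Phi$ is the union of exactly three segments emanating from $p$: \begin{itemize} \item one in the primitive direction $e_2$, of weight $n$, \item one in the primitive direction $-e_1-n e_2$, of weight $1$, \item one in the primitive direction $e_1$, of weight $1$; \end{itemize} moreover $\mathcal{F}_\Phi<\mathcal{F}_\Phi(p)$ on the first two segments (other than at $p$) and $\mathcal{F}_\Phi>\mathcal{F}_\Phi(p)$ on the third one. In the language of the particle process: a non-final collision involves exactly two particles, one of mass $n\ge 1$ and one of mass $1$, and produces a single particle of mass $1$ (so at most one of the colliding particles has mass greater than one). Equivalently, the dual polygon of $p$ (the convex hull of the gradients of $\mathcal{F}_\Phi$ on the regions adjacent to $p$) is, up to translation and lattice automorphism of $M$, the triangle with vertices $(0,0),(0,1),(-n,1)$, an $A_n$-type triangle of area $n/2$.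
   Context: $N$ is a rank-two lattice, $N_\mathbb{R}=N\otimes\mathbb{R}$, and $M=\operatorname{Hom}(N,\mathbb{Z})$ is the dual lattice. For a compact convex domain $\Phi\subset N_\mathbb{R}$, the tropical distance series is $\mathcal{F}_\Phi(x)=\min_{\lambda\in M\setminus\{0\}}\big(\lambda(x)-\min_{q\in\Phi}\lambda(q)\big)$ for $x\in\Phi$, i.e. the minimum of all support functions of $\Phi$ with integral gradient; it is non-negative on $\Phi$ and vanishes on $\partial\Phi$. The tropical propagation of $\Phi$ at time $t\ge0$ is $\Phi(t)=\{x\in\Phi:\mathcal{F}_\Phi(x)\geq t\}$ (equivalently, the intersection of all rational-slope support half-planes $\{\lambda\ge c\}$ of $\Phi$, $\lambda\in M$ primitive, shifted to $\{\lambda\ge c+t\}$), and the tropical wave front is $\partial\Phi(t)=\mathcal{F}_\Phi^{-1}(t)$; the final time $t_\Phi$ is the maximal $t$ with $\Phi(t)\neq\emptyset$. The tropical caustic $\mathcal{K}_\Phi$ is the corner locus of $\mathcal{F}_\Phi$ in the interior of $\Phi$: the set of points where the minimum defining $\mathcal{F}_\Phi$ is attained by at least two distinct gradients (equivalently, the locus of vertices, i.e. special points, of the wave fronts $\partial\Phi(t)$, $t>0$, together with $\Phi(t_\Phi)$ when the latter is a segment). It is a graph with straight rational-slope edges; the weight of an edge is the lattice length of the difference of the two gradients of $\mathcal{F}_\Phi$ on either side of it, and the edges are balanced at every interior vertex. A vertex of $\mathcal{K}_\Phi$ is a point of $\mathcal{K}_\Phi$ near which $\mathcal{K}_\Phi$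 is not a single straight segment. Particle process: vertices of the wave front $\partial\Phi(t)$ are viewed as particles moving along edges of $\mathcal{K}_\Phi$ as $t$ increases, with mass equal to the edge weight and primitive velocity; at a collision momentum (mass times primitive velocity) is conserved. *)

theory Defs
  imports "HOL-Analysis.Analysis"
begin

text \<open>N = Z^2 inside N_R = real x real; M = Z^2 with the standard pairing.\<close>

definition vec :: "int \<times> int \<Rightarrow> real \<times> real" where
  "vec d = (real_of_int (fst d), real_of_int (snd d))"

definition pairing :: "int \<times> int \<Rightarrow> real \<times> real \<Rightarrow> real" where
  "pairing l x = real_of_int (fst l) * fst x + real_of_int (snd l) * snd x"

definition supp :: "(real \<times> real) set \<Rightarrow> int \<times> int \<Rightarrow> real" where
  "supp \<Phi> l = Inf (pairing l ` \<Phi>)"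

definition tdist :: "(real \<times> real) set \<Rightarrow> real \<times> real \<Rightarrow> real" where
  "tdist \<Phi> x = Inf {pairing l x - supp \<Phi> l | l. l \<noteq> (0, 0)}"

definition final_time :: "(real \<times> real) set \<Rightarrow> real" where
  "final_time \<Phi> = Sup (tdist \<Phi> ` \<Phi>)"

definition attains :: "(real \<times> real) set \<Rightarrow> real \<times> real \<Rightarrow> int \<times> int \<Rightarrow> bool" where
  "attains \<Phi> x l \<longleftrightarrow> l \<noteq> (0, 0) \<and> pairing l x - supp \<Phi> l = tdist \<Phi> x"

definition caustic :: "(real \<times> real) set \<Rightarrow> (real \<times> real) set" where
  "caustic \<Phi> = {x \<in> interior \<Phi>. \<exists>l1 l2. l1 \<noteq> l2 \<and> attains \<Phi> x l1 \<and> attains \<Phi> x l2}"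

definition caustic_vertex :: "(real \<times> real) set \<Rightarrow> real \<times> real \<Rightarrow> bool" where
  "caustic_vertex \<Phi> p \<longleftrightarrow> p \<in> caustic \<Phi> \<and>
     \<not> (\<exists>\<epsilon>>0. \<exists>d::real \<times> real. d \<noteq> 0 \<and>
            caustic \<Phi> \<inter> ball p \<epsilon> = {p + s *\<^sub>R d | s. True} \<inter> ball p \<epsilon>)"

definition diff_len :: "int \<times> int \<Rightarrow> int \<times> int \<Rightarrow> int" where
  "diff_len l l' = gcd (fst l - fst l') (snd l - snd l')"

definition lattice_basis :: "int \<times> int \<Rightarrow> int \<times> int \<Rightarrow> bool" where
  "lattice_basis e1 e2 \<longleftrightarrow> \<bar>fst e1 * snd e2 - snd e1 * fst e2\<bar> = 1"

text \<open>x lies on an edge of the caustic of weight w: near x, tdist is the minimum of two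
  affine functions with distinct integral gradients l, l' (the gradients on either side),
  and w is the lattice length of l - l'.\<close>
definition edge_weight :: "(real \<times> real) set \<Rightarrow> real \<times> real \<Rightarrow> int \<Rightarrow> bool" where
  "edge_weight \<Phi> x w \<longleftrightarrow> (\<exists>l l'. l \<noteq> l' \<and> diff_len l l' = w \<and>
      (\<exists>\<delta>>0. \<forall>y\<in>ball x \<delta>.
         tdist \<Phi> y = tdist \<Phi> x + min (pairing l (y - x)) (pairing l' (y - x))))"

end

theory Submission
  imports Defs
begin

definition G :: "(real \<times> real) set \<Rightarrow> real \<times> real \<Rightarrow> int \<times> int \<Rightarrow> real" where
  "G \<Phi> x l = pairing l x - supp \<Phi> l"
definition idot :: "int \<times> int \<Rightarrow> int \<times> int \<Rightarrow> int" where
  "idot l d = fst l * fst d + snd l * snd d"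
definition det2 :: "int \<times> int \<Rightarrow> int \<times> int \<Rightarrow> int" where
  "det2 u w = fst u * snd w - snd u * fst w"
definition smul :: "int \<Rightarrow> int \<times> int \<Rightarrow> int \<times> int" where
  "smul k l = (k * fst l, k * snd l)"

lemma pairing_inner: "pairing l x = vec l \<bullet> x"
  by (simp add: pairing_def vec_def inner_prod_def)

lemma pairing_add_left: "pairing (l + l') x = pairing l x + pairing l' x"
  by (simp add: pairing_def algebra_simps)

lemma pairing_smul: "pairing (smul k l) x = of_int k * pairing l x"
  by (simp add: pairing_def smul_def algebra_simps)

lemma pairing_add_right: "pairing l (x + y) = pairing l x + pairing l y"
  by (simp add: pairing_def algebra_simps)

lemma pairing_diff_right: "pairing l (x - y) = pairing l x - pairing l y"
  by (simp add: pairing_def algebra_simps)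

lemma pairing_scaleR: "pairing l (c *\<^sub>R x) = c * pairing l x"
  by (simp add: pairing_def algebra_simps)

lemma pairing_vec: "pairing l (vec d) = of_int (idot l d)"
  by (simp add: pairing_def vec_def idot_def)

lemma pairing_zero: "pairing (0,0) x = 0"
  by (simp add: pairing_def)

lemma pairing_bound: "\<bar>pairing l x\<bar> \<le> norm (vec l) * norm x"
  unfolding pairing_inner by (rule Cauchy_Schwarz_ineq2)

lemma norm_vec_fst: "\<bar>real_of_int (fst l)\<bar> \<le> norm (vec l)"
  by (simp add: vec_def norm_Pair real_le_rsqrt)

lemma norm_vec_snd: "\<bar>real_of_int (snd l)\<bar> \<le> norm (vec l)"
  by (simp add: vec_def norm_Pair real_le_rsqrt)

lemma aux_sq: "(x::real)\<^sup>2 + y\<^sup>2 \<le> (\<bar>x\<bar> + \<bar>y\<bar>)\<^sup>2"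
proof -
  have "(\<bar>x\<bar> + \<bar>y\<bar>)\<^sup>2 = \<bar>x\<bar>\<^sup>2 + \<bar>y\<bar>\<^sup>2 + 2*\<bar>x\<bar>*\<bar>y\<bar>" by (simp add: power2_sum)
  then show ?thesis by simp
qed

lemma norm_vec_le: "norm (vec l) \<le> \<bar>real_of_int (fst l)\<bar> + \<bar>real_of_int (snd l)\<bar>"
proof -
  have "sqrt ((real_of_int (fst l))\<^sup>2 + (real_of_int (snd l))\<^sup>2) \<le> sqrt ((\<bar>real_of_int (fst l)\<bar> + \<bar>real_of_int (snd l)\<bar>)\<^sup>2)"
    by (rule real_sqrt_le_mono) (rule aux_sq)
  then show ?thesis by (simp add: vec_def norm_Pair)
qed

lemma norm_vec_ge1: "l \<noteq> (0,0) \<Longrightarrow> 1 \<le> norm (vec l)"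
proof -
  assume "l \<noteq> (0,0)"
  then have "fst l \<noteq> 0 \<or> snd l \<noteq> 0" by (cases l) auto
  then show ?thesis
  proof
    assume "fst l \<noteq> 0"
    then have "1 \<le> \<bar>real_of_int (fst l)\<bar>" by linarith
    then show ?thesis using norm_vec_fst[of l] by linarith
  next
    assume "snd l \<noteq> 0"
    then have "1 \<le> \<bar>real_of_int (snd l)\<bar>" by linarith
    then show ?thesis using norm_vec_snd[of l] by linarith
  qed
qed

lemma continuous_pairing: "continuous_on S (pairing l)"
  unfolding pairing_def by (intro continuous_intros)

lemma supp_attained:
  assumes "compact \<Phi>" "\<Phi> \<noteq> {}"
  shows "\<exists>q\<in>\<Phi>. supp \<Phi> l = pairing l q \<and> (\<forall>q'\<in>\<Phi>. pairing l q \<le> pairing l q')"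
proof -
  obtain q where q: "q \<in> \<Phi>" "\<forall>q'\<in>\<Phi>. pairing l q \<le> pairing l q'"
    using continuous_attains_inf[OF assms continuous_pairing] by blast
  have "supp \<Phi> l = pairing l q"
    unfolding supp_def by (rule cInf_eq_minimum) (use q in auto)
  with q show ?thesis by blast
qed

lemma supp_le:
  assumes "compact \<Phi>" "q \<in> \<Phi>"
  shows "supp \<Phi> l \<le> pairing l q"
proof -
  have "\<Phi> \<noteq> {}" using assms(2) by auto
  then show ?thesis using supp_attained[OF assms(1), of l] assms(2) by auto
qed

lemma G_lower:
  assumes "compact \<Phi>" "cball x r \<subseteq> \<Phi>" "r \<ge> 0"
  shows "G \<Phi> x l \<ge> r * norm (vec l)"
proof (cases "vec l = 0")
  case True
  have "x \<in> \<Phi>" using assms by auto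
  then show ?thesis using True supp_le[OF assms(1), of x l] by (simp add: G_def)
next
  case False
  define q where "q = x - (r / norm (vec l)) *\<^sub>R vec l"
  have "dist x q = r" using False assms(3) by (simp add: q_def dist_norm)
  then have "q \<in> \<Phi>" using assms(2) by auto
  then have "supp \<Phi> l \<le> pairing l q" by (rule supp_le[OF assms(1)])
  also have "pairing l q = pairing l x - (r / norm (vec l)) * (vec l \<bullet> vec l)"
    by (simp add: q_def pairing_inner inner_diff_right)
  also have "(r / norm (vec l)) * (vec l \<bullet> vec l) = r * norm (vec l)"
    using False by (simp add: power2_norm_eq_inner[symmetric] power2_eq_square)
  finally show ?thesis by (simp add: G_def)
qed

lemma tdist_set: "{pairing l x - supp \<Phi> l | l. l \<noteq> (0, 0)} = {G \<Phi> x l | l. l \<noteq> (0,0)}"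
  by (simp add: G_def)

lemma tdist_le:
  assumes "compact \<Phi>" "x \<in> \<Phi>" "l \<noteq> (0,0)"
  shows "tdist \<Phi> x \<le> G \<Phi> x l"
proof -
  have b: "bdd_below {G \<Phi> x l | l. l \<noteq> (0,0)}"
    by (rule bdd_belowI[of _ 0]) (use supp_le[OF assms(1,2)] in \<open>auto simp: G_def\<close>)
  show ?thesis unfolding tdist_def tdist_set by (rule cInf_lower[OF _ b]) (use assms(3) in blast)
qed

lemma G_shift: "G \<Phi> y l = G \<Phi> p l + pairing l (y - p)"
  by (simp add: G_def pairing_diff_right)

lemma attains_G: "attains \<Phi> y l \<longleftrightarrow> l \<noteq> (0,0) \<and> G \<Phi> y l = tdist \<Phi> y"
  by (simp add: attains_def G_def)

lemma finite_min_obtain: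
  fixes f :: "'a \<Rightarrow> real"
  assumes "finite S" "S \<noteq> {}"
  obtains s where "s \<in> S" "\<forall>t\<in>S. f s \<le> f t"
proof -
  have "Min (f ` S) \<in> f ` S" using assms by simp
  then obtain s where "s \<in> S" "f s = Min (f ` S)" by auto
  then show ?thesis using that assms by auto
qed

lemma LOC:
  assumes cpt: "compact \<Phi>" and pint: "p \<in> interior \<Phi>"
  defines "T \<equiv> tdist \<Phi> p"
  defines "S \<equiv> {l. l \<noteq> (0,0) \<and> G \<Phi> p l = T}"
  shows "finite S \<and> S \<noteq> {} \<and> (\<exists>\<epsilon>>0. ball p \<epsilon> \<subseteq> interior \<Phi> \<and>
     (\<forall>y\<in>ball p \<epsilon>. (\<forall>l. attains \<Phi> y l \<longleftrightarrow> l \<in> S \<and> (\<forall>s\<in>S. pairing l (y-p) \<le> pairing s (y-p))) \<and>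
        (\<forall>l\<in>S. (\<forall>s\<in>S. pairing l (y-p) \<le> pairing s (y-p)) \<longrightarrow> tdist \<Phi> y = T + pairing l (y-p))))"
proof -
  obtain r where r: "r > 0" "cball p r \<subseteq> interior \<Phi>"
    using open_contains_cball[THEN iffD1, OF open_interior] pint by blast
  have rPhi: "cball p r \<subseteq> \<Phi>" using r(2) interior_subset by blast
  have pPhi: "p \<in> \<Phi>" using rPhi r(1) by auto
  have Gnn: "\<And>l. G \<Phi> p l \<ge> r * norm (vec l)" using G_lower[OF cpt rPhi] r(1) by simp
  define c0 where "c0 = G \<Phi> p (1,0)"
  have c0nn: "c0 \<ge> 0"
  proof -
    have "r * norm (vec (1,0)) \<ge> 0" using r(1) by simp
    then show ?thesis using Gnn[of "(1,0)"] unfolding c0_def by linarith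
  qed
  have Tc0: "T \<le> c0" unfolding T_def c0_def by (rule tdist_le[OF cpt pPhi]) simp
  define R :: int where "R = \<lceil>(2*c0+2)/r\<rceil> + 1"
  have R1: "real_of_int R \<ge> 1"
  proof -
    have "(2*c0+2)/r > 0" using c0nn r(1) by simp
    moreover have "of_int \<lceil>(2*c0+2)/r\<rceil> \<ge> (2*c0+2)/r" by (rule le_of_int_ceiling)
    ultimately have "\<lceil>(2*c0+2)/r\<rceil> \<ge> 0" by linarith
    then have "R \<ge> 1" unfolding R_def by simp
    then show ?thesis by simp
  qed
  have rR: "r * real_of_int R > (2*c0+2)"
  proof -
    have "real_of_int R > (2*c0+2)/r" unfolding R_def by linarith
    then show ?thesis using r(1) by (simp add: field_simps)
  qed
  define B where "B = {-R..R} \<times> {-R..R}"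
  have finB: "finite B" unfolding B_def by simp
  have outB: "norm (vec l) > real_of_int R" if "l \<notin> B" for l
  proof -
    have "\<bar>fst l\<bar> > R \<or> \<bar>snd l\<bar> > R" using that unfolding B_def by (cases l) auto
    then have "real_of_int R < \<bar>real_of_int (fst l)\<bar> \<or> real_of_int R < \<bar>real_of_int (snd l)\<bar>"
      by (metis of_int_abs of_int_less_iff)
    then show ?thesis using norm_vec_fst[of l] norm_vec_snd[of l] by linarith
  qed
  have inB: "norm (vec l) \<le> 2 * real_of_int R" if "l \<in> B" for l
  proof -
    have "\<bar>fst l\<bar> \<le> R" "\<bar>snd l\<bar> \<le> R" using that unfolding B_def by (cases l, auto)+
    then have "\<bar>real_of_int (fst l)\<bar> \<le> real_of_int R" "\<bar>real_of_int (snd l)\<bar> \<le> real_of_int R"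
      by (metis of_int_abs of_int_le_iff)+
    then show ?thesis using norm_vec_le[of l] by linarith
  qed
  have bigout: "G \<Phi> p l > (2*c0+2)" if "l \<notin> B" for l
  proof -
    have "r * norm (vec l) \<ge> r * real_of_int R" using outB[OF that] r(1) by simp
    then show ?thesis using Gnn[of l] rR by linarith
  qed
  define Bz where "Bz = B - {(0,0)}"
  have finBz: "finite Bz" unfolding Bz_def using finB by simp
  have oneBz: "(1,0) \<in> Bz" unfolding Bz_def B_def using R1 by auto
  define m where "m = Min (G \<Phi> p ` Bz)"
  have m_in: "m \<in> G \<Phi> p ` Bz" unfolding m_def using finBz oneBz by (intro Min_in) auto
  have m_le: "m \<le> G \<Phi> p l" if "l \<in> Bz" for l unfolding m_def using finBz that by simp
  have mc0: "m \<le> c0" using m_le[OF oneBz] unfolding c0_def .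
  have Tm: "T = m" unfolding T_def tdist_def tdist_set
  proof (rule cInf_eq_minimum)
    show "m \<in> {G \<Phi> p l |l. l \<noteq> (0, 0)}" using m_in unfolding Bz_def by auto
    fix x assume "x \<in> {G \<Phi> p l |l. l \<noteq> (0, 0)}"
    then obtain l where l: "x = G \<Phi> p l" "l \<noteq> (0,0)" by auto
    show "m \<le> x"
    proof (cases "l \<in> B")
      case True then show ?thesis using m_le l unfolding Bz_def by auto
    next
      case False
      have "G \<Phi> p l > m" using bigout[OF False] mc0 c0nn by linarith
      then show ?thesis using l(1) by simp
    qed
  qed
  have Sne: "S \<noteq> {}" using m_in Tm unfolding S_def Bz_def by auto
  have SB: "S \<subseteq> B"
  proof
    fix l assume "l \<in> S"
    then have "G \<Phi> p l = T" unfolding S_def by auto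
    then show "l \<in> B" using bigout[of l] Tc0 c0nn by (cases "l \<in> B") auto
  qed
  have finS: "finite S" using finite_subset[OF SB finB] .
  have G1: "G \<Phi> p l \<ge> T" if "l \<noteq> (0,0)" for l unfolding T_def by (rule tdist_le[OF cpt pPhi that])
  define N where "N = Bz - S"
  have finN: "finite N" unfolding N_def using finBz by simp
  define \<eta>0 where "\<eta>0 = (if N = {} then 1 else Min ((\<lambda>l. G \<Phi> p l - T) ` N))"
  have \<eta>0pos: "\<eta>0 > 0"
  proof (cases "N = {}")
    case True then show ?thesis unfolding \<eta>0_def by simp
  next
    case False
    have "Min ((\<lambda>l. G \<Phi> p l - T) ` N) \<in> (\<lambda>l. G \<Phi> p l - T) ` N" using False finN by (intro Min_in) auto
    then obtain l where l: "l \<in> N" "Min ((\<lambda>l. G \<Phi> p l - T) ` N) = G \<Phi> p l - T" by auto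
    have "l \<noteq> (0,0)" "l \<notin> S" using l(1) unfolding N_def Bz_def by auto
    then have "G \<Phi> p l > T" using G1[of l] unfolding S_def by auto
    then show ?thesis using False l unfolding \<eta>0_def by simp
  qed
  have \<eta>0le: "G \<Phi> p l - T \<ge> \<eta>0" if "l \<in> N" for l
    using that finN unfolding \<eta>0_def by (auto intro: Min_le)
  define \<eta> where "\<eta> = min 1 \<eta>0"
  have \<eta>pos: "\<eta> > 0" "\<eta> \<le> 1" using \<eta>0pos unfolding \<eta>_def by auto
  have \<eta>le: "G \<Phi> p l \<ge> T + \<eta>" if "l \<in> N" for l using \<eta>0le[OF that] unfolding \<eta>_def by linarith
  define \<epsilon> where "\<epsilon> = min (r/2) (\<eta> / (4 * real_of_int R))"
  have \<epsilon>pos: "\<epsilon> > 0" unfolding \<epsilon>_def using r(1) \<eta>pos R1 by simp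
  have \<epsilon>r: "\<epsilon> \<le> r/2" unfolding \<epsilon>_def by simp
  have \<epsilon>R: "2 * real_of_int R * \<epsilon> \<le> \<eta>/2"
  proof -
    have "\<epsilon> \<le> \<eta> / (4 * real_of_int R)" unfolding \<epsilon>_def by simp
    then have "\<epsilon> * (4 * real_of_int R) \<le> \<eta>" using R1 by (simp add: pos_le_divide_eq)
    then show ?thesis by (simp add: algebra_simps)
  qed
  have ballsub: "ball p \<epsilon> \<subseteq> interior \<Phi>" using r(2) \<epsilon>r r(1) by auto
  have main: "(\<forall>l. attains \<Phi> y l \<longleftrightarrow> l \<in> S \<and> (\<forall>s\<in>S. pairing l (y-p) \<le> pairing s (y-p))) \<and>
        (\<forall>l\<in>S. (\<forall>s\<in>S. pairing l (y-p) \<le> pairing s (y-p)) \<longrightarrow> tdist \<Phi> y = T + pairing l (y-p))"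
    if y: "y \<in> ball p \<epsilon>" for y
  proof -
    define w where "w = y - p"
    have nw: "norm w < \<epsilon>" using y unfolding w_def by (simp add: dist_norm norm_minus_commute)
    have pB: "\<bar>pairing l w\<bar> < \<eta>/2" if "l \<in> B" for l
    proof -
      have "\<bar>pairing l w\<bar> \<le> norm (vec l) * norm w" by (rule pairing_bound)
      also have "\<dots> \<le> 2 * real_of_int R * norm w" using inB[OF that] by (simp add: mult_right_mono)
      also have "\<dots> < \<eta>/2"
      proof -
        have "2 * real_of_int R * norm w < 2 * real_of_int R * \<epsilon>" using nw R1 by simp
        then show ?thesis using \<epsilon>R by linarith
      qed
      finally show ?thesis .
    qed
    have GS: "G \<Phi> y s = T + pairing s w" if "s \<in> S" for s
      using that G_shift[of \<Phi> y s p] unfolding S_def w_def by simp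
    have GSlt: "G \<Phi> y s < T + \<eta>/2" if "s \<in> S" for s using GS[OF that] pB[of s] SB that by auto
    have Gbig: "G \<Phi> y l > G \<Phi> y s" if "l \<noteq> (0,0)" "l \<notin> S" "s \<in> S" for l s
    proof (cases "l \<in> B")
      case True
      then have "l \<in> N" using that unfolding N_def Bz_def by auto
      then have "G \<Phi> p l \<ge> T + \<eta>" by (rule \<eta>le)
      moreover have "G \<Phi> y l = G \<Phi> p l + pairing l w" using G_shift unfolding w_def by simp
      ultimately show ?thesis using pB[OF True] GSlt[OF that(3)] by linarith
    next
      case False
      have "\<bar>pairing l w\<bar> \<le> norm (vec l) * \<epsilon>"
      proof -
        have "norm (vec l) * norm w \<le> norm (vec l) * \<epsilon>" using nw by (simp add: mult_left_mono)
        then show ?thesis using pairing_bound[of l w] by linarith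
      qed
      also have "\<dots> \<le> norm (vec l) * (r/2)" using \<epsilon>r by (intro mult_left_mono) auto
      finally have a: "\<bar>pairing l w\<bar> \<le> norm (vec l) * (r/2)" .
      have "G \<Phi> y l = G \<Phi> p l + pairing l w" using G_shift unfolding w_def by simp
      then have "G \<Phi> y l \<ge> r * norm (vec l) - norm (vec l) * (r/2)" using Gnn[of l] a by linarith
      moreover have "r * norm (vec l) - norm (vec l) * (r/2) = (r/2) * norm (vec l)" by (simp add: algebra_simps)
      moreover have "(r/2) * norm (vec l) > (r/2) * real_of_int R" using outB[OF False] r(1) by simp
      moreover have "(r/2) * real_of_int R = (r * real_of_int R)/2" by simp
      ultimately have "G \<Phi> y l > c0 + 1" using rR by linarith
      then show ?thesis using GSlt[OF that(3)] \<eta>pos Tc0 by linarith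
    qed
    obtain s0 where s0: "s0 \<in> S" "\<forall>t\<in>S. pairing s0 w \<le> pairing t w"
      using finite_min_obtain[OF finS Sne, of "\<lambda>s. pairing s w"] by blast
    have s0nz: "s0 \<noteq> (0,0)" using s0(1) unfolding S_def by auto
    have td: "tdist \<Phi> y = G \<Phi> y s0" unfolding tdist_def tdist_set
    proof (rule cInf_eq_minimum)
      show "G \<Phi> y s0 \<in> {G \<Phi> y l |l. l \<noteq> (0, 0)}" using s0nz by blast
      fix x assume "x \<in> {G \<Phi> y l |l. l \<noteq> (0, 0)}"
      then obtain l where l: "x = G \<Phi> y l" "l \<noteq> (0,0)" by auto
      show "G \<Phi> y s0 \<le> x"
      proof (cases "l \<in> S")
        case True then show ?thesis using GS s0 l by auto
      next
        case False then show ?thesis using Gbig[OF l(2) False s0(1)] l by simp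
      qed
    qed
    have A1: "attains \<Phi> y l \<longleftrightarrow> l \<in> S \<and> (\<forall>s\<in>S. pairing l w \<le> pairing s w)" for l
    proof
      assume a: "attains \<Phi> y l"
      then have l: "l \<noteq> (0,0)" "G \<Phi> y l = G \<Phi> y s0" unfolding attains_G td by auto
      then have lS: "l \<in> S" using Gbig[of l s0] s0(1) by fastforce
      then have "pairing l w = pairing s0 w" using l GS s0(1) by simp
      then show "l \<in> S \<and> (\<forall>s\<in>S. pairing l w \<le> pairing s w)" using lS s0 by simp
    next
      assume a: "l \<in> S \<and> (\<forall>s\<in>S. pairing l w \<le> pairing s w)"
      then have "pairing l w = pairing s0 w" using s0 by (meson order_antisym)
      then show "attains \<Phi> y l" unfolding attains_G td using a GS s0(1) unfolding S_def by auto
    qed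
    have A2: "tdist \<Phi> y = T + pairing l w" if "l \<in> S" "\<forall>s\<in>S. pairing l w \<le> pairing s w" for l
    proof -
      have "pairing l w = pairing s0 w" using that s0 by (meson order_antisym)
      then show ?thesis using td GS[OF s0(1)] by simp
    qed
    show ?thesis using A1 A2 unfolding w_def by blast
  qed
  show ?thesis using finS Sne \<epsilon>pos ballsub main by blast
qed

lemma smul_add: "smul k (x + y) = smul k x + smul k y"
  by (simp add: smul_def algebra_simps)
lemma smul_smul: "smul k (smul k' x) = smul (k*k') x"
  by (simp add: smul_def algebra_simps)
lemma smul_0 [simp]: "smul 0 x = (0,0)"
  by (simp add: smul_def)
lemma smul_1 [simp]: "smul 1 x = x"
  by (simp add: smul_def)

definition Lc :: "int \<times> int \<Rightarrow> int \<times> int \<Rightarrow> int \<Rightarrow> int \<Rightarrow> int \<times> int" where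
  "Lc a b x y = (x * fst a + y * fst b, x * snd a + y * snd b)"

lemma cramer: "smul (det2 a w) x = smul (det2 x w) a + smul (det2 a x) w"
  by (simp add: smul_def det2_def prod_eq_iff algebra_simps)

lemma Lc_smul: "smul k (Lc a b x y) = Lc a b (k*x) (k*y)"
  by (simp add: smul_def Lc_def algebra_simps)
lemma Lc_add: "Lc a b x y + Lc a b x' y' = Lc a b (x+x') (y+y')"
  by (simp add: Lc_def algebra_simps)
lemma Lc_10: "Lc a b 1 0 = a" by (simp add: Lc_def)
lemma Lc_01: "Lc a b 0 1 = b" by (simp add: Lc_def)
lemma det_Lc: "det2 (Lc a b x y) (Lc a b x' y') = (x*y' - y*x') * det2 a b"
  by (simp add: Lc_def det2_def algebra_simps)
lemma det_a_Lc: "det2 a (Lc a b x y) = y * det2 a b"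
  by (simp add: Lc_def det2_def algebra_simps)
lemma det_b_Lc: "det2 b (Lc a b x y) = - x * det2 a b"
  by (simp add: Lc_def det2_def algebra_simps)
lemma Lc_coords:
  assumes "det2 a b = 1" shows "s = Lc a b (- det2 b s) (det2 a s)"
proof -
  have "s = smul (det2 a b) s" using assms by (simp add: smul_def)
  also have "\<dots> = Lc a b (- det2 b s) (det2 a s)"
    by (simp add: Lc_def smul_def det2_def prod_eq_iff algebra_simps)
  finally show ?thesis .
qed
lemma Lc_inj: "det2 a b = 1 \<Longrightarrow> Lc a b x y = Lc a b x' y' \<longleftrightarrow> x = x' \<and> y = y'"
  by (metis det_a_Lc det_b_Lc mult_1_right neg_equal_iff_equal)
lemma Lc_nz: "det2 a b = 1 \<Longrightarrow> (x \<noteq> 0 \<or> y \<noteq> 0) \<Longrightarrow> Lc a b x y \<noteq> (0,0)"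
  using Lc_inj[of a b x y 0 0] by (simp add: Lc_def)

locale lat =
  fixes g :: "int \<times> int \<Rightarrow> real" and T :: real and v :: "real \<times> real"
  assumes G1: "\<And>l. l \<noteq> (0,0) \<Longrightarrow> T \<le> g l"
    and G2: "\<And>a b. g (a + b) \<le> g a + g b"
    and G3: "\<And>k l. k \<ge> 0 \<Longrightarrow> of_int k * g l \<le> g (smul k l)"
    and g0: "g (0,0) = 0"
    and Tpos: "T > 0"
    and finS: "finite {l. l \<noteq> (0,0) \<and> g l = T}"
    and half: "\<And>s. s \<in> {l. l \<noteq> (0,0) \<and> g l = T} \<Longrightarrow> pairing s v > 0"
begin

definition S where "S = {l. l \<noteq> (0,0) \<and> g l = T}"

lemma S_iff: "l \<in> S \<longleftrightarrow> l \<noteq> (0,0) \<and> g l = T" by (simp add: S_def)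

lemma smul_le_nat: "g (smul (int i) a) \<le> real i * g a"
proof (induction i)
  case 0 then show ?case by (simp add: g0)
next
  case (Suc i)
  have "smul (int (Suc i)) a = smul (int i) a + a" by (simp add: smul_def prod_eq_iff algebra_simps)
  then have "g (smul (int (Suc i)) a) \<le> g (smul (int i) a) + g a" using G2 by simp
  then show ?case using Suc by (simp add: algebra_simps)
qed

lemma smul_le: "i \<ge> 0 \<Longrightarrow> g (smul i a) \<le> of_int i * g a"
  using smul_le_nat[of "nat i" a] by simp

lemma comb:
  assumes "a \<in> S" "b \<in> S" "z \<noteq> (0,0)" "i \<ge> 0" "j \<ge> 0" "k \<ge> 1"
    and eq: "smul k z = smul i a + smul j b"
  shows "k \<le> i + j \<and> (k = i + j \<longrightarrow> z \<in> S)"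
proof -
  have ga: "g a = T" "g b = T" using assms(1,2) by (auto simp: S_iff)
  have m1: "of_int k * T \<le> of_int k * g z" using G1[OF assms(3)] assms(6) by simp
  have m2: "of_int k * g z \<le> g (smul k z)" using G3 assms(6) by simp
  have m3: "g (smul k z) \<le> g (smul i a) + g (smul j b)" unfolding eq by (rule G2)
  have m4: "g (smul i a) + g (smul j b) \<le> of_int i * T + of_int j * T"
    using smul_le[OF assms(4), of a] smul_le[OF assms(5), of b] ga by simp
  have m5: "of_int i * T + of_int j * T = of_int (i + j) * T" by (simp add: algebra_simps)
  have main: "of_int k * T \<le> of_int k * g z" "of_int k * g z \<le> of_int (i + j) * T"
    using m1 m2 m3 m4 m5 by linarith+
  have "of_int k * T \<le> of_int (i+j) * T" using main by linarith
  then have "real_of_int k \<le> of_int (i+j)" using Tpos by simp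
  then have kij: "k \<le> i + j" by linarith
  moreover have "z \<in> S" if "k = i + j"
  proof -
    have "of_int k * g z \<le> of_int k * T" using main that by simp
    then have "g z \<le> T" using assms(6) by simp
    then show ?thesis using G1[OF assms(3)] assms(3) by (simp add: S_iff)
  qed
  ultimately show ?thesis by blast
qed

lemma H:
  assumes "c > 0" "d > 0" "smul c s = smul d t" "s \<in> S" "t \<in> S"
  shows "s = t"
proof -
  have tnz: "t \<noteq> (0,0)" "s \<noteq> (0,0)" using assms(4,5) by (auto simp: S_iff)
  have "smul d t = smul c s + smul 0 s" using assms(3) by (simp add: smul_def)
  then have "d \<le> c" using comb[OF assms(4) assms(4) tnz(1), of c 0 d] assms by auto
  moreover have "smul c s = smul d t + smul 0 t" using assms(3) by (simp add: smul_def)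
  then have "c \<le> d" using comb[OF assms(5) assms(5) tnz(2), of d 0 c] assms by auto
  ultimately have "c = d" by simp
  then show ?thesis using assms(1,3) by (simp add: smul_def prod_eq_iff)
qed

lemma H':
  assumes "c \<noteq> 0" "smul c s = smul d t" "s \<in> S" "t \<in> S"
  shows "s = t"
proof -
  have Ps: "pairing s v > 0" "pairing t v > 0" using half assms(3,4) by (auto simp: S_def)
  have e: "of_int c * pairing s v = of_int d * pairing t v"
    using arg_cong[OF assms(2), of "\<lambda>l. pairing l v"] by (simp add: pairing_smul)
  show ?thesis
  proof (cases "c > 0")
    case True
    then have "of_int c * pairing s v > 0" using Ps by simp
    then have "of_int d * pairing t v > 0" using e by simp
    then have "d > 0" using Ps by (simp add: zero_less_mult_iff)
    then show ?thesis using H[OF True _ assms(2-4)] by simp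
  next
    case False
    then have c: "c < 0" using assms(1) by simp
    then have "of_int c * pairing s v < 0" using Ps by (simp add: mult_neg_pos)
    then have "of_int d * pairing t v < 0" using e by simp
    then have "d < 0" using Ps by (simp add: mult_less_0_iff)
    moreover have "smul (-c) s = smul (-d) t" using assms(2) by (simp add: smul_def prod_eq_iff)
    ultimately show ?thesis using H[of "-c" "-d" s t] c assms(3,4) by simp
  qed
qed

lemma par:
  assumes "s \<in> S" "t \<in> S" "det2 s t = 0"
  shows "s = t"
proof -
  have e1: "smul (fst t) s = smul (fst s) t" "smul (snd t) s = smul (snd s) t"
    using assms(3) by (simp_all add: smul_def det2_def prod_eq_iff algebra_simps)
  have "t \<noteq> (0,0)" using assms(2) by (simp add: S_iff)
  then have "fst t \<noteq> 0 \<or> snd t \<noteq> 0" by (cases t) auto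
  then show ?thesis using H'[OF _ e1(1) assms(1,2)] H'[OF _ e1(2) assms(1,2)] by blast
qed

definition rho :: "int \<times> int \<Rightarrow> real" where
  "rho s = (fst v * real_of_int (snd s) - snd v * real_of_int (fst s)) / pairing s v"

lemma ord:
  assumes "s \<in> S" "t \<in> S"
  shows "rho s \<le> rho t \<longleftrightarrow> 0 \<le> det2 s t"
proof -
  define Ps where "Ps = pairing s v"
  define Pt where "Pt = pairing t v"
  define cs where "cs = fst v * real_of_int (snd s) - snd v * real_of_int (fst s)"
  define ct where "ct = fst v * real_of_int (snd t) - snd v * real_of_int (fst t)"
  have P: "Ps > 0" "Pt > 0" using half assms unfolding Ps_def Pt_def by (auto simp: S_def)
  have vnz: "(fst v)\<^sup>2 + (snd v)\<^sup>2 > 0"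
  proof (rule ccontr)
    assume "\<not> ?thesis"
    then have "fst v = 0" "snd v = 0" by (auto simp: sum_power2_gt_zero_iff)
    then have "Ps = 0" unfolding Ps_def by (simp add: pairing_def)
    then show False using P by simp
  qed
  have id: "Ps * ct - Pt * cs = ((fst v)\<^sup>2 + (snd v)\<^sup>2) * real_of_int (det2 s t)"
    unfolding Ps_def Pt_def cs_def ct_def by (simp add: pairing_def det2_def power2_eq_square algebra_simps)
  have "rho s \<le> rho t \<longleftrightarrow> cs / Ps \<le> ct / Pt" unfolding rho_def cs_def ct_def Ps_def Pt_def by simp
  also have "\<dots> \<longleftrightarrow> cs * Pt \<le> ct * Ps" using P by (simp add: divide_le_eq le_divide_eq field_simps)
  also have "\<dots> \<longleftrightarrow> 0 \<le> Ps * ct - Pt * cs" by (simp add: algebra_simps)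
  also have "\<dots> \<longleftrightarrow> 0 \<le> real_of_int (det2 s t)" unfolding id using vnz by (simp add: zero_le_mult_iff)
  finally show ?thesis by simp
qed

lemma exists_ab:
  assumes "a0 \<in> S" "b0 \<in> S" "a0 \<noteq> b0"
  obtains a b where "a \<in> S" "b \<in> S" "det2 a b = 1"
    "\<And>s. s \<in> S \<Longrightarrow> s \<noteq> a \<Longrightarrow> s \<noteq> b \<Longrightarrow> det2 a s > 0 \<and> det2 b s > 0"
proof -
  have fS: "finite S" using finS by (simp add: S_def)
  obtain a where a: "a \<in> S" "\<forall>s\<in>S. rho a \<le> rho s"
    using finite_min_obtain[OF fS, of rho] assms(1) by blast
  have ne: "S - {a} \<noteq> {}" using assms by auto
  obtain b where b: "b \<in> S - {a}" "\<forall>s\<in>S - {a}. rho b \<le> rho s"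
    using finite_min_obtain[OF _ ne, of rho] fS by blast
  have dA: "det2 a s > 0" if "s \<in> S" "s \<noteq> a" for s
  proof -
    have "det2 a s \<ge> 0" using ord[OF a(1) that(1)] a(2) that(1) by simp
    moreover have "det2 a s \<noteq> 0" using par[OF a(1) that(1)] that(2) by auto
    ultimately show ?thesis by simp
  qed
  have dB: "det2 b s > 0" if "s \<in> S" "s \<noteq> a" "s \<noteq> b" for s
  proof -
    have bS: "b \<in> S" using b(1) by simp
    have "det2 b s \<ge> 0" using ord[OF bS that(1)] b(2) that(1,2) by simp
    moreover have "det2 b s \<noteq> 0" using par[OF bS that(1)] that(3) by auto
    ultimately show ?thesis by simp
  qed
  have aS: "a \<in> S" and bS: "b \<in> S" and ba: "b \<noteq> a" using a b by auto
  define d where "d = det2 a b"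
  have dpos: "d > 0" unfolding d_def using dA[OF bS ba] .
  have anz: "a \<noteq> (0,0)" using aS by (simp add: S_iff)
  define k where "k = gcd (fst a) (snd a)"
  have kpos: "k > 0" unfolding k_def using anz by (cases a) auto
  define a' where "a' = (fst a div k, snd a div k)"
  have ka: "smul k a' = a" unfolding a'_def smul_def k_def by (simp add: prod_eq_iff)
  have a'nz: "a' \<noteq> (0,0)"
  proof
    assume "a' = (0,0)"
    then have "a = (0,0)" using ka by (simp add: smul_def)
    then show False using anz by simp
  qed
  have "smul k a' = smul 1 a + smul 0 a" using ka by (simp add: smul_def prod_eq_iff)
  then have "k \<le> 1" using comb[OF aS aS a'nz, of 1 0 k] kpos by simp
  then have g1: "gcd (fst a) (snd a) = 1" using kpos unfolding k_def by linarith
  obtain u w0 where uw: "u * fst a + w0 * snd a = 1" using bezout_int[of "fst a" "snd a"] g1 by auto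
  define w where "w = (-w0, u)"
  have aw: "det2 a w = 1" unfolding w_def det2_def using uw by (simp add: algebra_simps)
  define \<alpha> where "\<alpha> = det2 b w"
  have bdec: "b = smul \<alpha> a + smul d w" using cramer[of a w b] aw unfolding \<alpha>_def d_def by simp
  define q where "q = (-\<alpha>) div d"
  define j where "j = (-\<alpha>) mod d"
  define kk where "kk = -q"
  have j0: "0 \<le> j" "j < d" unfolding j_def using dpos by simp_all
  have dkk: "d * kk = j + \<alpha>"
  proof -
    have "q * d + j = -\<alpha>" unfolding q_def j_def by simp
    then show ?thesis unfolding kk_def by (simp add: algebra_simps)
  qed
  define z where "z = smul kk a + w"
  have zeq: "smul d z = smul j a + smul 1 b"
  proof -
    have h: "\<And>x. d * (kk * x) = \<alpha> * x + j * x"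
      by (simp add: mult.assoc[symmetric] dkk distrib_right add.commute)
    show ?thesis unfolding z_def using bdec by (simp add: smul_def prod_eq_iff algebra_simps h)
  qed
  have az: "det2 a z = 1" unfolding z_def using aw by (simp add: det2_def smul_def algebra_simps)
  have znz: "z \<noteq> (0,0)" using az by (auto simp: det2_def)
  have c: "d \<le> j + 1 \<and> (d = j + 1 \<longrightarrow> z \<in> S)"
    using comb[OF aS bS znz j0(1), of 1 d] zeq dpos by simp
  then have dj: "d = j + 1" "z \<in> S" using j0 by auto
  have bz: "det2 b z = - j"
  proof -
    have "det2 b z = kk * det2 b a + det2 b w" unfolding z_def by (simp add: det2_def smul_def algebra_simps)
    also have "det2 b a = - d" unfolding d_def by (simp add: det2_def)
    finally show ?thesis using dkk unfolding \<alpha>_def by (simp add: algebra_simps)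
  qed
  have za: "z \<noteq> a" using az by (auto simp: det2_def)
  have "rho b \<le> rho z" using b(2) dj(2) za by simp
  then have "det2 b z \<ge> 0" using ord[OF bS dj(2)] by simp
  then have "j = 0" using bz j0 by simp
  then have d1: "det2 a b = 1" using dj unfolding d_def by simp
  show ?thesis
    by (rule that[OF aS bS d1]) (use dA dB in auto)
qed

lemma classify:
  assumes aS: "a \<in> S" and bS: "b \<in> S" and ab: "det2 a b = 1"
    and rest: "\<And>s. s \<in> S \<Longrightarrow> s \<noteq> a \<Longrightarrow> s \<noteq> b \<Longrightarrow> det2 a s > 0 \<and> det2 b s > 0"
  shows "(\<exists>base u m. u \<noteq> (0,0) \<and> m \<ge> 1 \<and> (\<forall>l. l \<in> S \<longleftrightarrow> (\<exists>k. 0 \<le> k \<and> k \<le> m \<and> l = base + smul k u)))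
       \<or> (\<exists>\<delta> \<beta> n. n \<ge> 1 \<and> \<bar>det2 \<delta> \<beta>\<bar> = 1 \<and>
            (\<forall>l. l \<in> S \<longleftrightarrow> (l = smul (-1) \<delta> \<or> (\<exists>j. 0 \<le> j \<and> j \<le> n \<and> l = \<beta> + smul j \<delta>))))"
proof -
  have fS: "finite S" using finS by (simp add: S_def)
  have nz: "Lc a b x y \<noteq> (0,0)" if "x \<noteq> 0 \<or> y \<noteq> 0" for x y using Lc_nz[OF ab that] .
  have aL: "a = Lc a b 1 0" and bL: "b = Lc a b 0 1" by (simp_all add: Lc_10 Lc_01)
  have form: "\<exists>X\<ge>1. s = Lc a b (-X) 1 \<or> s = Lc a b (-X) (X+1)"
    if sS: "s \<in> S" and sa: "s \<noteq> a" and sb: "s \<noteq> b" for s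
  proof -
    define X where "X = det2 b s"
    define Y where "Y = det2 a s"
    have XY: "X \<ge> 1" "Y \<ge> 1" using rest[OF sS sa sb] unfolding X_def Y_def by auto
    have sdef: "s = Lc a b (-X) Y" unfolding X_def Y_def by (rule Lc_coords[OF ab])
    have bnz: "b \<noteq> (0,0)" using bS by (simp add: S_iff)
    have "smul Y b = smul 1 s + smul X a"
      using sdef by (simp add: Lc_def smul_def prod_eq_iff algebra_simps)
    then have Y1: "Y \<le> X + 1" using comb[OF sS aS bnz, of 1 X Y] XY by simp
    have Y2: "\<not> (2 \<le> Y \<and> Y \<le> X)"
    proof
      assume h: "2 \<le> Y \<and> Y \<le> X"
      have "smul X (Lc a b (-1) 1) = smul 1 s + smul (X - Y) b"
        using sdef by (simp add: Lc_def smul_def prod_eq_iff algebra_simps)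
      then have "X \<le> 1 + (X - Y)" using comb[OF sS bS nz[of "-1" 1], of 1 "X - Y" X] XY h by simp
      then show False using h by simp
    qed
    have "Y = 1 \<or> Y = X + 1" using Y1 Y2 XY by linarith
    then show ?thesis using sdef XY by blast
  qed
  have gapQ: "Lc a b (-j) 1 \<in> S" if "Lc a b (-q) 1 \<in> S" "1 \<le> j" "j \<le> q" for q j
  proof -
    have "smul q (Lc a b (-j) 1) = smul j (Lc a b (-q) 1) + smul (q - j) b"
      by (simp add: Lc_def smul_def prod_eq_iff algebra_simps)
    then show ?thesis using comb[OF that(1) bS nz[of "-j" 1], of j "q - j" q] that by simp
  qed
  have gapR: "Lc a b (-j) (j+1) \<in> S" if "Lc a b (-r) (r+1) \<in> S" "1 \<le> j" "j \<le> r" for r j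
  proof -
    have "smul r (Lc a b (-j) (j+1)) = smul j (Lc a b (-r) (r+1)) + smul (r - j) b"
      by (simp add: Lc_def smul_def prod_eq_iff algebra_simps)
    then show ?thesis using comb[OF that(1) bS nz[of "-j" "j+1"], of j "r - j" r] that by simp
  qed
  have excl: "\<not> (Lc a b (-2) 1 \<in> S \<and> Lc a b (-1) 2 \<in> S)"
  proof
    assume h: "Lc a b (-2) 1 \<in> S \<and> Lc a b (-1) 2 \<in> S"
    have "smul 3 (Lc a b (-1) 1) = smul 1 (Lc a b (-2) 1) + smul 1 (Lc a b (-1) 2)"
      by (simp add: Lc_def smul_def prod_eq_iff algebra_simps)
    then show False using comb[of "Lc a b (-2) 1" "Lc a b (-1) 2" "Lc a b (-1) 1" 1 1 3] h nz[of "-1" 1] by simp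
  qed
  define Qs where "Qs = {j. 1 \<le> j \<and> Lc a b (-j) 1 \<in> S}"
  define Rs where "Rs = {j. 1 \<le> j \<and> Lc a b (-j) (j+1) \<in> S}"
  have finQ: "finite Qs"
  proof -
    have "inj (\<lambda>j. Lc a b (-j) 1)" by (rule injI) (simp add: Lc_inj[OF ab])
    then have "finite ((\<lambda>j. Lc a b (-j) 1) -` S)" using finite_vimageI fS by blast
    then show ?thesis unfolding Qs_def by (rule rev_finite_subset) auto
  qed
  have finR: "finite Rs"
  proof -
    have "inj (\<lambda>j. Lc a b (-j) (j+1))" by (rule injI) (simp add: Lc_inj[OF ab])
    then have "finite ((\<lambda>j. Lc a b (-j) (j+1)) -` S)" using finite_vimageI fS by blast
    then show ?thesis unfolding Rs_def by (rule rev_finite_subset) auto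
  qed
  define qm where "qm = (if Qs = {} then 0 else Max Qs)"
  define rm where "rm = (if Rs = {} then 0 else Max Rs)"
  have Qiff: "Lc a b (-j) 1 \<in> S \<longleftrightarrow> 1 \<le> j \<and> j \<le> qm" if "1 \<le> j" for j
  proof
    assume "Lc a b (-j) 1 \<in> S"
    then have "j \<in> Qs" unfolding Qs_def using that by simp
    then show "1 \<le> j \<and> j \<le> qm" unfolding qm_def using finQ that by auto
  next
    assume h: "1 \<le> j \<and> j \<le> qm"
    then have "Qs \<noteq> {}" unfolding qm_def by (cases "Qs = {}") auto
    then have "qm \<in> Qs" unfolding qm_def using finQ by simp
    then show "Lc a b (-j) 1 \<in> S" using gapQ[of qm j] h unfolding Qs_def by simp
  qed
  have Riff: "Lc a b (-j) (j+1) \<in> S \<longleftrightarrow> 1 \<le> j \<and> j \<le> rm" if "1 \<le> j" for j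
  proof
    assume "Lc a b (-j) (j+1) \<in> S"
    then have "j \<in> Rs" unfolding Rs_def using that by simp
    then show "1 \<le> j \<and> j \<le> rm" unfolding rm_def using finR that by auto
  next
    assume h: "1 \<le> j \<and> j \<le> rm"
    then have "Rs \<noteq> {}" unfolding rm_def by (cases "Rs = {}") auto
    then have "rm \<in> Rs" unfolding rm_def using finR by simp
    then show "Lc a b (-j) (j+1) \<in> S" using gapR[of rm j] h unfolding Rs_def by simp
  qed
  have qm0: "qm \<ge> 0"
  proof (cases "Qs = {}")
    case True then show ?thesis unfolding qm_def by simp
  next
    case False
    then have "Max Qs \<in> Qs" using finQ by simp
    then show ?thesis unfolding qm_def using False by (auto simp: Qs_def)
  qed
  have rm0: "rm \<ge> 0"
  proof (cases "Rs = {}")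
    case True then show ?thesis unfolding rm_def by simp
  next
    case False
    then have "Max Rs \<in> Rs" using finR by simp
    then show ?thesis unfolding rm_def using False by (auto simp: Rs_def)
  qed
  have char: "l \<in> S \<longleftrightarrow> l = a \<or> l = b \<or> (\<exists>j. 1 \<le> j \<and> j \<le> qm \<and> l = Lc a b (-j) 1)
                  \<or> (\<exists>j. 1 \<le> j \<and> j \<le> rm \<and> l = Lc a b (-j) (j+1))" for l
  proof
    assume lS: "l \<in> S"
    show "l = a \<or> l = b \<or> (\<exists>j. 1 \<le> j \<and> j \<le> qm \<and> l = Lc a b (-j) 1)
                  \<or> (\<exists>j. 1 \<le> j \<and> j \<le> rm \<and> l = Lc a b (-j) (j+1))"
    proof (cases "l = a \<or> l = b")
      case True then show ?thesis by blast
    next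
      case False
      then obtain X where X: "X \<ge> 1" "l = Lc a b (-X) 1 \<or> l = Lc a b (-X) (X+1)"
        using form[OF lS] by blast
      then show ?thesis using Qiff[of X] Riff[of X] lS by auto
    qed
  next
    assume "l = a \<or> l = b \<or> (\<exists>j. 1 \<le> j \<and> j \<le> qm \<and> l = Lc a b (-j) 1)
                  \<or> (\<exists>j. 1 \<le> j \<and> j \<le> rm \<and> l = Lc a b (-j) (j+1))"
    then show "l \<in> S" using aS bS Qiff Riff by auto
  qed
  have nboth: "\<not> (qm \<ge> 2 \<and> rm \<ge> 1)"
  proof
    assume h: "qm \<ge> 2 \<and> rm \<ge> 1"
    then have "Lc a b (-2) 1 \<in> S" using Qiff[of 2] by simp
    moreover have "Lc a b (-1) (1+1) \<in> S" using Riff[of 1] h by simp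
    ultimately show False using excl by simp
  qed
  show ?thesis
  proof (cases "qm = 0")
    case True
    define u where "u = Lc a b (-1) 1"
    have unz: "u \<noteq> (0,0)" unfolding u_def by (rule nz) simp
    have e: "a + smul k u = Lc a b (1 - k) k" for k
      unfolding u_def by (simp add: Lc_def smul_def prod_eq_iff algebra_simps)
    have "l \<in> S \<longleftrightarrow> (\<exists>k. 0 \<le> k \<and> k \<le> rm + 1 \<and> l = a + smul k u)" for l
    proof
      assume "l \<in> S"
      then have "l = a \<or> l = b \<or> (\<exists>j. 1 \<le> j \<and> j \<le> rm \<and> l = Lc a b (-j) (j+1))"
        using char True by auto
      then show "\<exists>k. 0 \<le> k \<and> k \<le> rm + 1 \<and> l = a + smul k u"
      proof (elim disjE exE conjE)
        assume "l = a" then show ?thesis using e[of 0] rm0 aL by (intro exI[of _ 0]) simp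
      next
        assume "l = b" then show ?thesis using e[of 1] rm0 bL by (intro exI[of _ 1]) simp
      next
        fix j assume "1 \<le> j" "j \<le> rm" "l = Lc a b (-j) (j+1)"
        then show ?thesis using e[of "j+1"] by (intro exI[of _ "j+1"]) simp
      qed
    next
      assume "\<exists>k. 0 \<le> k \<and> k \<le> rm + 1 \<and> l = a + smul k u"
      then obtain k where k: "0 \<le> k" "k \<le> rm + 1" "l = Lc a b (1 - k) k" using e by auto
      consider "k = 0" | "k = 1" | "k \<ge> 2" using k by linarith
      then show "l \<in> S"
      proof cases
        case 1 then show ?thesis using k aS aL by simp
      next
        case 2 then show ?thesis using k bS bL by simp
      next
        case 3
        then have "l = Lc a b (-(k-1)) ((k-1)+1)" using k by simp
        moreover have "Lc a b (-(k-1)) ((k-1)+1) \<in> S" using Riff[of "k-1"] 3 k by simp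
        ultimately show ?thesis by simp
      qed
    qed
    then show ?thesis using unz rm0 by (intro disjI1 exI[of _ a] exI[of _ u] exI[of _ "rm+1"]) auto
  next
    case False
    then have qm1: "qm \<ge> 1" using qm0 by simp
    show ?thesis
    proof (cases "rm = 0")
      case True
      define \<delta> where "\<delta> = Lc a b (-1) 0"
      have d1: "smul (-1) \<delta> = a" unfolding \<delta>_def by (simp add: Lc_def smul_def)
      have d2: "b + smul j \<delta> = Lc a b (-j) 1" for j
        unfolding \<delta>_def by (simp add: Lc_def smul_def prod_eq_iff algebra_simps)
      have dt: "det2 \<delta> b = -1" unfolding \<delta>_def using det_Lc[of a b "-1" 0 0 1] ab by (simp add: Lc_01)
      have "l \<in> S \<longleftrightarrow> (l = smul (-1) \<delta> \<or> (\<exists>j. 0 \<le> j \<and> j \<le> qm \<and> l = b + smul j \<delta>))" for l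
      proof -
        have "(\<exists>j. 1 \<le> j \<and> j \<le> rm \<and> l = Lc a b (-j) (j+1)) = False" using True by auto
        moreover have "(l = b \<or> (\<exists>j. 1 \<le> j \<and> j \<le> qm \<and> l = Lc a b (-j) 1)) \<longleftrightarrow>
              (\<exists>j. 0 \<le> j \<and> j \<le> qm \<and> l = Lc a b (-j) 1)"
        proof
          assume "l = b \<or> (\<exists>j. 1 \<le> j \<and> j \<le> qm \<and> l = Lc a b (-j) 1)"
          then show "\<exists>j. 0 \<le> j \<and> j \<le> qm \<and> l = Lc a b (-j) 1"
          proof
            assume "l = b" then show ?thesis using bL qm1 by (intro exI[of _ 0]) simp
          next
            assume "\<exists>j. 1 \<le> j \<and> j \<le> qm \<and> l = Lc a b (-j) 1"
            then obtain j where "1 \<le> j" "j \<le> qm" "l = Lc a b (-j) 1" by blast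
            then show ?thesis by (intro exI[of _ j]) simp
          qed
        next
          assume "\<exists>j. 0 \<le> j \<and> j \<le> qm \<and> l = Lc a b (-j) 1"
          then obtain j where j: "0 \<le> j" "j \<le> qm" "l = Lc a b (-j) 1" by blast
          show "l = b \<or> (\<exists>j. 1 \<le> j \<and> j \<le> qm \<and> l = Lc a b (-j) 1)"
          proof (cases "j = 0")
            case True then show ?thesis using j bL by simp
          next
            case False then show ?thesis using j by (intro disjI2 exI[of _ j]) simp
          qed
        qed
        ultimately show ?thesis unfolding d1 d2 char by blast
      qed
      then show ?thesis using qm1 dt by (intro disjI2 exI[of _ \<delta>] exI[of _ b] exI[of _ qm]) auto
    next
      case False
      then have rm1: "rm \<ge> 1" using rm0 by simp
      then have q1: "qm = 1" using nboth qm1 by simp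
      define \<delta> where "\<delta> = Lc a b 1 (-1)"
      define \<beta> where "\<beta> = Lc a b (-rm) (rm+1)"
      have d1: "smul (-1) \<delta> = Lc a b (-1) 1" unfolding \<delta>_def by (simp add: Lc_def smul_def)
      have d2: "\<beta> + smul j \<delta> = Lc a b (j - rm) (rm + 1 - j)" for j
        unfolding \<delta>_def \<beta>_def by (simp add: Lc_def smul_def prod_eq_iff algebra_simps)
      have dt: "det2 \<delta> \<beta> = 1" unfolding \<delta>_def \<beta>_def using det_Lc[of a b 1 "-1" "-rm" "rm+1"] ab
        by (simp add: algebra_simps)
      have "l \<in> S \<longleftrightarrow> (l = smul (-1) \<delta> \<or> (\<exists>j. 0 \<le> j \<and> j \<le> rm + 1 \<and> l = \<beta> + smul j \<delta>))" for l
      proof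
        assume "l \<in> S"
        then have "l = a \<or> l = b \<or> l = Lc a b (-1) 1 \<or> (\<exists>j. 1 \<le> j \<and> j \<le> rm \<and> l = Lc a b (-j) (j+1))"
        proof -
          have "(\<exists>j. 1 \<le> j \<and> j \<le> qm \<and> l = Lc a b (-j) 1) \<Longrightarrow> l = Lc a b (-1) 1"
          proof -
            assume "\<exists>j. 1 \<le> j \<and> j \<le> qm \<and> l = Lc a b (-j) 1"
            then obtain j where "1 \<le> j" "j \<le> qm" "l = Lc a b (-j) 1" by blast
            then have "j = 1" "l = Lc a b (-j) 1" using q1 by auto
            then show ?thesis by simp
          qed
          then show ?thesis using char[of l] \<open>l \<in> S\<close> by blast
        qed
        then show "l = smul (-1) \<delta> \<or> (\<exists>j. 0 \<le> j \<and> j \<le> rm + 1 \<and> l = \<beta> + smul j \<delta>)"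
        proof (elim disjE exE conjE)
          assume "l = a" then show ?thesis using d2[of "rm+1"] rm1 aL by (intro disjI2 exI[of _ "rm+1"]) simp
        next
          assume "l = b" then show ?thesis using d2[of "rm"] rm1 bL by (intro disjI2 exI[of _ "rm"]) simp
        next
          assume "l = Lc a b (-1) 1" then show ?thesis using d1 by simp
        next
          fix j assume "1 \<le> j" "j \<le> rm" "l = Lc a b (-j) (j+1)"
          then show ?thesis using d2[of "rm - j"] by (intro disjI2 exI[of _ "rm - j"]) (simp add: algebra_simps)
        qed
      next
        assume "l = smul (-1) \<delta> \<or> (\<exists>j. 0 \<le> j \<and> j \<le> rm + 1 \<and> l = \<beta> + smul j \<delta>)"
        then show "l \<in> S"
        proof (elim disjE exE conjE)
          assume "l = smul (-1) \<delta>" then show ?thesis using d1 Qiff[of 1] q1 by simp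
        next
          fix j assume j: "0 \<le> j" "j \<le> rm + 1" "l = \<beta> + smul j \<delta>"
          then have l: "l = Lc a b (j - rm) (rm + 1 - j)" using d2 by simp
          consider "j = rm + 1" | "j = rm" | "j < rm" using j by linarith
          then show ?thesis
          proof cases
            case 1 then show ?thesis using l aS aL by simp
          next
            case 2 then show ?thesis using l bS bL by simp
          next
            case 3
            then have "l = Lc a b (-(rm - j)) ((rm - j) + 1)" using l by (simp add: algebra_simps)
            then show ?thesis using Riff[of "rm - j"] 3 j by simp
          qed
        qed
      qed
      then show ?thesis using rm1 dt by (intro disjI2 exI[of _ \<delta>] exI[of _ \<beta>] exI[of _ "rm+1"]) auto
    qed
  qed
qed

end

lemma pairing_vec_scale: "pairing l (s *\<^sub>R vec d) = s * of_int (idot l d)"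
  by (simp add: pairing_scaleR pairing_vec)

lemma add_00: "(x::int \<times> int) + (0,0) = x"
  by (simp add: prod_eq_iff)

lemma pairing_minus_right: "pairing l (- x) = - pairing l x"
  by (simp add: pairing_def)

lemma pairing_uminus_smul: "pairing (smul (-1) l) w = - pairing l w"
  by (simp add: pairing_smul)

lemma pairing_plus_smul: "pairing (b + smul k l) w = pairing b w + of_int k * pairing l w"
  by (simp add: pairing_add_left pairing_smul)

lemma det_inj:
  assumes "det2 d b \<noteq> 0" "pairing d w = pairing d w'" "pairing b w = pairing b w'"
  shows "w = w'"
proof -
  define x where "x = fst w - fst w'"
  define y where "y = snd w - snd w'"
  have e1: "of_int (fst d) * x + of_int (snd d) * y = 0" using assms(2)
    unfolding x_def y_def by (simp add: pairing_def algebra_simps)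
  have e2: "of_int (fst b) * x + of_int (snd b) * y = 0" using assms(3)
    unfolding x_def y_def by (simp add: pairing_def algebra_simps)
  have Dr: "real_of_int (det2 d b) \<noteq> 0" using assms(1) by simp
  have "real_of_int (det2 d b) * x = of_int (snd b) * (of_int (fst d) * x + of_int (snd d) * y)
        - of_int (snd d) * (of_int (fst b) * x + of_int (snd b) * y)"
    by (simp add: det2_def algebra_simps)
  then have "real_of_int (det2 d b) * x = 0" using e1 e2 by simp
  then have x0: "x = 0" using Dr by simp
  have "real_of_int (det2 d b) * y = of_int (fst d) * (of_int (fst b) * x + of_int (snd b) * y)
        - of_int (fst b) * (of_int (fst d) * x + of_int (snd d) * y)"
    by (simp add: det2_def algebra_simps)
  then have "real_of_int (det2 d b) * y = 0" using e1 e2 by simp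
  then have y0: "y = 0" using Dr by simp
  show ?thesis using x0 y0 unfolding x_def y_def by (simp add: prod_eq_iff)
qed

lemma gcd_det:
  assumes "\<bar>det2 x y\<bar> = 1"
  shows "gcd (fst x) (snd x) = 1"
proof -
  have "gcd (fst x) (snd x) dvd det2 x y" unfolding det2_def by (simp add: dvd_diff dvd_mult2)
  then have "gcd (fst x) (snd x) dvd \<bar>det2 x y\<bar>" by (simp add: dvd_abs_iff)
  then have "gcd (fst x) (snd x) dvd 1" using assms by simp
  then show ?thesis by simp
qed

lemma perp_line:
  assumes "u \<noteq> (0,0)"
  shows "pairing u w = 0 \<longleftrightarrow> (\<exists>s. w = s *\<^sub>R vec (- snd u, fst u))"
proof
  assume h: "pairing u w = 0"
  show "\<exists>s. w = s *\<^sub>R vec (- snd u, fst u)"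
  proof (cases "fst u = 0")
    case False
    have h': "of_int (fst u) * fst w = - (of_int (snd u) * snd w)" using h by (simp add: pairing_def)
    show ?thesis
    proof (intro exI[of _ "snd w / of_int (fst u)"])
      show "w = (snd w / of_int (fst u)) *\<^sub>R vec (- snd u, fst u)"
        using False h' by (simp add: vec_def prod_eq_iff field_simps)
    qed
  next
    case True
    then have s: "snd u \<noteq> 0" using assms by (cases u) auto
    have "of_int (snd u) * snd w = 0" using h True by (simp add: pairing_def)
    then have w2: "snd w = 0" using s by simp
    show ?thesis
    proof (intro exI[of _ "- fst w / of_int (snd u)"])
      show "w = (- fst w / of_int (snd u)) *\<^sub>R vec (- snd u, fst u)"
        using True s w2 by (simp add: vec_def prod_eq_iff field_simps)
    qed
  qed
next
  assume "\<exists>s. w = s *\<^sub>R vec (- snd u, fst u)"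
  then show "pairing u w = 0" by (auto simp: pairing_def vec_def algebra_simps)
qed

lemma EW:
  assumes fS: "finite S"
    and LOCt: "\<forall>y\<in>ball p \<epsilon>. \<forall>l\<in>S. (\<forall>s\<in>S. pairing l (y-p) \<le> pairing s (y-p)) \<longrightarrow> tdist \<Phi> y = T + pairing l (y-p)"
    and y: "y \<in> ball p \<epsilon>" and lS: "l \<in> S" "l' \<in> S"
    and mn: "\<forall>s\<in>S. pairing l (y-p) \<le> pairing s (y-p)"
    and eq: "pairing l' (y-p) = pairing l (y-p)"
    and cond: "\<forall>s\<in>S. pairing s (y-p) > pairing l (y-p) \<or> (\<forall>u. min (pairing l u) (pairing l' u) \<le> pairing s u)"
  shows "\<exists>\<delta>>0. \<forall>z\<in>ball y \<delta>. tdist \<Phi> z = tdist \<Phi> y + min (pairing l (z-y)) (pairing l' (z-y))"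
proof -
  define w where "w = y - p"
  define Sst where "Sst = {s\<in>S. pairing s w > pairing l w}"
  have finSst: "finite Sst" unfolding Sst_def using fS by simp
  define \<gamma> where "\<gamma> = (if Sst = {} then 1 else Min ((\<lambda>s. pairing s w - pairing l w) ` Sst))"
  have \<gamma>pos: "\<gamma> > 0"
  proof (cases "Sst = {}")
    case True then show ?thesis unfolding \<gamma>_def by simp
  next
    case False
    have "Min ((\<lambda>s. pairing s w - pairing l w) ` Sst) \<in> (\<lambda>s. pairing s w - pairing l w) ` Sst"
      using False finSst by (intro Min_in) auto
    then obtain s where "s \<in> Sst" "Min ((\<lambda>s. pairing s w - pairing l w) ` Sst) = pairing s w - pairing l w" by auto
    then show ?thesis using False unfolding \<gamma>_def Sst_def by simp
  qed
  have \<gamma>le: "pairing s w - pairing l w \<ge> \<gamma>" if "s \<in> Sst" for s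
    using that finSst unfolding \<gamma>_def by (auto intro: Min_le)
  define C where "C = Max ((\<lambda>s. norm (vec s)) ` S) + 1"
  have Cb: "norm (vec s) \<le> C" if "s \<in> S" for s
  proof -
    have "norm (vec s) \<le> Max ((\<lambda>s. norm (vec s)) ` S)" using fS that by (intro Max_ge) auto
    then show ?thesis unfolding C_def by simp
  qed
  have Cpos: "C > 0"
  proof -
    have "norm (vec l) \<le> Max ((\<lambda>s. norm (vec s)) ` S)" using fS lS(1) by (intro Max_ge) auto
    then show ?thesis unfolding C_def using norm_ge_zero[of "vec l"] by linarith
  qed
  define \<delta> where "\<delta> = min (\<epsilon> - dist p y) (\<gamma> / (2*C))"
  have \<delta>pos: "\<delta> > 0" unfolding \<delta>_def using y \<gamma>pos Cpos by simp
  have main: "tdist \<Phi> z = tdist \<Phi> y + min (pairing l (z-y)) (pairing l' (z-y))" if z: "z \<in> ball y \<delta>" for z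
  proof -
    define u where "u = z - y"
    have nu: "norm u < \<gamma> / (2*C)" using z unfolding u_def \<delta>_def by (simp add: dist_norm norm_minus_commute)
    have zb: "z \<in> ball p \<epsilon>"
    proof -
      have "dist p z \<le> dist p y + dist y z" by (rule dist_triangle)
      then show ?thesis using z unfolding \<delta>_def by simp
    qed
    have pu: "\<bar>pairing s u\<bar> < \<gamma>/2" if "s \<in> S" for s
    proof -
      have "\<bar>pairing s u\<bar> \<le> norm (vec s) * norm u" by (rule pairing_bound)
      also have "\<dots> \<le> C * norm u" using Cb[OF that] by (simp add: mult_right_mono)
      also have "\<dots> < C * (\<gamma> / (2*C))" using nu Cpos by (intro mult_strict_left_mono) auto
      also have "\<dots> = \<gamma>/2" using Cpos by simp
      finally show ?thesis .
    qed
    have zp: "z - p = w + u" unfolding w_def u_def by simp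
    define m where "m = min (pairing l u) (pairing l' u)"
    define ls where "ls = (if pairing l u \<le> pairing l' u then l else l')"
    have lsS: "ls \<in> S" unfolding ls_def using lS by simp
    have lsv: "pairing ls (z - p) = pairing l w + m"
      unfolding ls_def m_def zp pairing_add_right using eq unfolding w_def by auto
    have lsmin: "\<forall>s\<in>S. pairing ls (z-p) \<le> pairing s (z-p)"
    proof
      fix s assume sS: "s \<in> S"
      show "pairing ls (z-p) \<le> pairing s (z-p)"
      proof (cases "pairing s w > pairing l w")
        case True
        then have "s \<in> Sst" unfolding Sst_def using sS by simp
        then have "pairing s w \<ge> pairing l w + \<gamma>" using \<gamma>le by fastforce
        moreover have "m \<le> pairing l u" unfolding m_def by simp
        ultimately show ?thesis using lsv pu[OF sS] pu[OF lS(1)] unfolding zp pairing_add_right by linarith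
      next
        case False
        then have "pairing s w = pairing l w" using mn sS unfolding w_def by force
        moreover have "m \<le> pairing s u"
        proof -
          have "\<forall>u. min (pairing l u) (pairing l' u) \<le> pairing s u" using cond sS False unfolding w_def by blast
          then show ?thesis unfolding m_def by blast
        qed
        ultimately show ?thesis using lsv unfolding zp pairing_add_right by linarith
      qed
    qed
    have tz: "tdist \<Phi> z = T + pairing l w + m" using LOCt zb lsS lsmin lsv by fastforce
    have ty: "tdist \<Phi> y = T + pairing l w" using LOCt y lS(1) mn unfolding w_def by blast
    show ?thesis using tz ty unfolding m_def u_def by simp
  qed
  show ?thesis using \<delta>pos main by blast
qed

lemma arithA:
  fixes d b :: real and j n :: int
  assumes "0 \<le> j" "j \<le> n" "- d = b + of_int j * d" "- d \<le> b" "- d \<le> b + of_int n * d"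
  shows "(d = 0 \<and> b \<le> 0) \<or> (d \<ge> 0 \<and> b = - d) \<or> (d \<le> 0 \<and> b = - (of_int n + 1) * d)"
proof (cases "d < 0")
  case True
  have "0 \<le> (of_int n - of_int j) * d" using assms(3,5) by (simp add: algebra_simps)
  moreover have "(of_int n - of_int j) * d \<le> 0" using True assms(2) by (simp add: mult_nonneg_nonpos)
  ultimately have "(of_int n - of_int j) * d = 0" by simp
  then have "real_of_int n = of_int j" using True by simp
  then have "b = - (of_int n + 1) * d" using assms(3) by (simp add: algebra_simps)
  then show ?thesis using True by simp
next
  case False
  show ?thesis
  proof (cases "d = 0")
    case True then show ?thesis using assms(3) by simp
  next
    case False
    then have dp: "d > 0" using \<open>\<not> d < 0\<close> by simp
    have "of_int j * d \<ge> 0" using dp assms(1) by simp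
    then have "b = - d" using assms(3,4) by linarith
    then show ?thesis using dp by simp
  qed
qed

lemma A_case:
  assumes \<epsilon>pos: "\<epsilon> > 0" and ballsub: "ball p \<epsilon> \<subseteq> interior \<Phi>" and fS: "finite S"
    and LOCa: "\<forall>y\<in>ball p \<epsilon>. \<forall>l. attains \<Phi> y l \<longleftrightarrow> l \<in> S \<and> (\<forall>s\<in>S. pairing l (y-p) \<le> pairing s (y-p))"
    and LOCt: "\<forall>y\<in>ball p \<epsilon>. \<forall>l\<in>S. (\<forall>s\<in>S. pairing l (y-p) \<le> pairing s (y-p)) \<longrightarrow> tdist \<Phi> y = tdist \<Phi> p + pairing l (y-p)"
    and n1: "n \<ge> 1" and dt: "\<bar>det2 \<delta> \<beta>\<bar> = 1"
    and Sch: "\<forall>l. l \<in> S \<longleftrightarrow> (l = smul (-1) \<delta> \<or> (\<exists>j. 0 \<le> j \<and> j \<le> n \<and> l = \<beta> + smul j \<delta>))"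
  shows "\<exists>(n::nat) (e1::int \<times> int) (e2::int \<times> int). n \<ge> 1 \<and> lattice_basis e1 e2 \<and>
    (let d1 = e2;
         d2 = (- fst e1 - int n * fst e2, - snd e1 - int n * snd e2);
         d3 = e1
     in \<exists>\<epsilon>>0.
        (\<forall>y\<in>ball p \<epsilon>. y \<in> caustic \<Phi> \<longleftrightarrow>
            (\<exists>s\<ge>0. y = p + s *\<^sub>R vec d1 \<or> y = p + s *\<^sub>R vec d2 \<or> y = p + s *\<^sub>R vec d3)) \<and>
        (\<forall>s>0. p + s *\<^sub>R vec d1 \<in> ball p \<epsilon> \<longrightarrow>
            edge_weight \<Phi> (p + s *\<^sub>R vec d1) (int n) \<and>
            tdist \<Phi> (p + s *\<^sub>R vec d1) < tdist \<Phi> p) \<and>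
        (\<forall>s>0. p + s *\<^sub>R vec d2 \<in> ball p \<epsilon> \<longrightarrow>
            edge_weight \<Phi> (p + s *\<^sub>R vec d2) 1 \<and>
            tdist \<Phi> (p + s *\<^sub>R vec d2) < tdist \<Phi> p) \<and>
        (\<forall>s>0. p + s *\<^sub>R vec d3 \<in> ball p \<epsilon> \<longrightarrow>
            edge_weight \<Phi> (p + s *\<^sub>R vec d3) 1 \<and>
            tdist \<Phi> (p + s *\<^sub>R vec d3) > tdist \<Phi> p))"
proof -
  define D where "D = det2 \<delta> \<beta>"
  have DD: "D * D = 1" using dt unfolding D_def by (metis abs_mult_self_eq mult_1_left)
  define e1 where "e1 = (D * (- snd \<beta> - (n+1) * snd \<delta>), D * ((n+1) * fst \<delta> + fst \<beta>))"
  define e2 where "e2 = (D * snd \<delta>, - D * fst \<delta>)"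
  define N where "N = nat n"
  have nN: "int N = n" using n1 unfolding N_def by simp
  define d2 where "d2 = (- fst e1 - int N * fst e2, - snd e1 - int N * snd e2)"
  have id1: "idot \<delta> e1 = -1"
  proof -
    have "idot \<delta> e1 = -(D*D)" unfolding e1_def idot_def D_def det2_def by (simp add: algebra_simps)
    then show ?thesis using DD by simp
  qed
  have id2: "idot \<beta> e1 = n+1"
  proof -
    have "idot \<beta> e1 = (n+1)*(D*D)" unfolding e1_def idot_def D_def det2_def by (simp add: algebra_simps)
    then show ?thesis using DD by simp
  qed
  have id3: "idot \<delta> e2 = 0" unfolding e2_def idot_def by (simp add: algebra_simps)
  have id4: "idot \<beta> e2 = -1"
  proof -
    have "idot \<beta> e2 = -(D*D)" unfolding e2_def idot_def D_def det2_def by (simp add: algebra_simps)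
    then show ?thesis using DD by simp
  qed
  have idd2: "idot l d2 = - idot l e1 - n * idot l e2" for l
    unfolding d2_def idot_def using nN by (simp add: algebra_simps)
  have id5: "idot \<delta> d2 = 1" using idd2 id1 id3 by simp
  have id6: "idot \<beta> d2 = -1" using idd2 id2 id4 by simp
  have lb: "lattice_basis e1 e2"
  proof -
    have "fst e1 * snd e2 - snd e1 * fst e2 = D * (D * D)" unfolding e1_def e2_def D_def det2_def
      by (simp add: algebra_simps)
    then show ?thesis unfolding lattice_basis_def using DD dt unfolding D_def by simp
  qed
  have Dnz: "det2 \<delta> \<beta> \<noteq> 0" using dt by auto
  have apexS: "smul (-1) \<delta> \<in> S" using Sch by blast
  have fjS: "\<beta> + smul j \<delta> \<in> S" if "0 \<le> j" "j \<le> n" for j using Sch that by blast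
  have ne1: "smul (-1) \<delta> \<noteq> \<beta>"
  proof
    assume "smul (-1) \<delta> = \<beta>"
    then have "det2 \<delta> \<beta> = 0" by (auto simp: det2_def smul_def)
    then show False using Dnz by simp
  qed
  have ne2: "smul (-1) \<delta> \<noteq> \<beta> + smul n \<delta>"
  proof
    assume "smul (-1) \<delta> = \<beta> + smul n \<delta>"
    then have "\<beta> = (- (n+1) * fst \<delta>, - (n+1) * snd \<delta>)" by (auto simp: smul_def prod_eq_iff algebra_simps)
    then have "det2 \<delta> \<beta> = 0" by (auto simp: det2_def algebra_simps)
    then show False using Dnz by simp
  qed
  have dnz: "\<delta> \<noteq> (0,0)" using Dnz by (auto simp: det2_def)
  have ne3: "\<beta> \<noteq> \<beta> + smul k \<delta>" if "k \<noteq> 0" for k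
    using that dnz by (cases \<delta>) (auto simp: smul_def prod_eq_iff)
  have Mn_iff: "(\<forall>s\<in>S. pairing l w \<le> pairing s w) \<longleftrightarrow>
      (pairing l w \<le> - pairing \<delta> w \<and> (\<forall>j. 0 \<le> j \<and> j \<le> n \<longrightarrow> pairing l w \<le> pairing \<beta> w + of_int j * pairing \<delta> w))" for l w
  proof
    assume h: "\<forall>s\<in>S. pairing l w \<le> pairing s w"
    show "pairing l w \<le> - pairing \<delta> w \<and> (\<forall>j. 0 \<le> j \<and> j \<le> n \<longrightarrow> pairing l w \<le> pairing \<beta> w + of_int j * pairing \<delta> w)"
      using h[rule_format, OF apexS] h[rule_format, OF fjS] by (simp add: pairing_uminus_smul pairing_plus_smul)
  next
    assume h: "pairing l w \<le> - pairing \<delta> w \<and> (\<forall>j. 0 \<le> j \<and> j \<le> n \<longrightarrow> pairing l w \<le> pairing \<beta> w + of_int j * pairing \<delta> w)"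
    show "\<forall>s\<in>S. pairing l w \<le> pairing s w"
    proof
      fix s assume "s \<in> S"
      then have "s = smul (-1) \<delta> \<or> (\<exists>j. 0 \<le> j \<and> j \<le> n \<and> s = \<beta> + smul j \<delta>)" using Sch by blast
      then show "pairing l w \<le> pairing s w" using h by (auto simp: pairing_uminus_smul pairing_plus_smul)
    qed
  qed
  define R where "R w \<longleftrightarrow> (pairing \<delta> w = 0 \<and> pairing \<beta> w \<le> 0) \<or> (pairing \<delta> w \<ge> 0 \<and> pairing \<beta> w = - pairing \<delta> w)
      \<or> (pairing \<delta> w \<le> 0 \<and> pairing \<beta> w = - (of_int n + 1) * pairing \<delta> w)" for w
  have key1: "(\<exists>l1 l2. l1 \<noteq> l2 \<and> l1 \<in> S \<and> l2 \<in> S \<and> (\<forall>s\<in>S. pairing l1 w \<le> pairing s w) \<and> (\<forall>s\<in>S. pairing l2 w \<le> pairing s w))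
      \<longleftrightarrow> R w" for w
  proof
    assume "\<exists>l1 l2. l1 \<noteq> l2 \<and> l1 \<in> S \<and> l2 \<in> S \<and> (\<forall>s\<in>S. pairing l1 w \<le> pairing s w) \<and> (\<forall>s\<in>S. pairing l2 w \<le> pairing s w)"
    then obtain l1 l2 where l: "l1 \<noteq> l2" "l1 \<in> S" "l2 \<in> S" and m1: "\<forall>s\<in>S. pairing l1 w \<le> pairing s w"
      and m2: "\<forall>s\<in>S. pairing l2 w \<le> pairing s w" by blast
    have eqv: "pairing l1 w = pairing l2 w" using m1 m2 l by (meson order_antisym)
    have M1: "pairing l1 w \<le> - pairing \<delta> w" "\<And>j. 0 \<le> j \<Longrightarrow> j \<le> n \<Longrightarrow> pairing l1 w \<le> pairing \<beta> w + of_int j * pairing \<delta> w"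
      using m1 Mn_iff by blast+
    have c1: "l1 = smul (-1) \<delta> \<or> (\<exists>j. 0 \<le> j \<and> j \<le> n \<and> l1 = \<beta> + smul j \<delta>)" using Sch l(2) by blast
    have c2: "l2 = smul (-1) \<delta> \<or> (\<exists>j. 0 \<le> j \<and> j \<le> n \<and> l2 = \<beta> + smul j \<delta>)" using Sch l(3) by blast
    show "R w"
    proof (cases "l1 = smul (-1) \<delta>")
      case a1: True
      then have "l2 \<noteq> smul (-1) \<delta>" using l(1) by simp
      then obtain j where j: "0 \<le> j" "j \<le> n" "l2 = \<beta> + smul j \<delta>" using c2 by blast
      have "- pairing \<delta> w = pairing \<beta> w + of_int j * pairing \<delta> w"
        using eqv a1 j(3) by (simp add: pairing_uminus_smul pairing_plus_smul)
      moreover have "- pairing \<delta> w \<le> pairing \<beta> w" using M1(2)[of 0] a1 n1 by (simp add: pairing_uminus_smul)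
      moreover have "- pairing \<delta> w \<le> pairing \<beta> w + of_int n * pairing \<delta> w" using M1(2)[of n] a1 n1 by (simp add: pairing_uminus_smul)
      ultimately show ?thesis unfolding R_def using arithA[OF j(1,2)] by blast
    next
      case a1: False
      then obtain i where i: "0 \<le> i" "i \<le> n" "l1 = \<beta> + smul i \<delta>" using c1 by blast
      show ?thesis
      proof (cases "l2 = smul (-1) \<delta>")
        case a2: True
        have "- pairing \<delta> w = pairing \<beta> w + of_int i * pairing \<delta> w"
          using eqv a2 i(3) by (simp add: pairing_uminus_smul pairing_plus_smul)
        moreover have M2: "\<And>j. 0 \<le> j \<Longrightarrow> j \<le> n \<Longrightarrow> pairing l2 w \<le> pairing \<beta> w + of_int j * pairing \<delta> w"
          using m2 Mn_iff by blast
        moreover have "- pairing \<delta> w \<le> pairing \<beta> w" using M2[of 0] a2 n1 by (simp add: pairing_uminus_smul)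
        moreover have "- pairing \<delta> w \<le> pairing \<beta> w + of_int n * pairing \<delta> w"
          using M2[of n] n1 a2 by (simp add: pairing_uminus_smul)
        ultimately show ?thesis unfolding R_def using arithA[OF i(1,2)] by blast
      next
        case a2: False
        then obtain j where j: "0 \<le> j" "j \<le> n" "l2 = \<beta> + smul j \<delta>" using c2 by blast
        have ij: "i \<noteq> j" using l(1) i(3) j(3) by auto
        have "of_int i * pairing \<delta> w = of_int j * pairing \<delta> w"
          using eqv i(3) j(3) by (simp add: pairing_plus_smul)
        then have "(of_int i - of_int j) * pairing \<delta> w = 0" by (simp add: algebra_simps)
        then have d0: "pairing \<delta> w = 0" using ij by simp
        have "pairing \<beta> w \<le> 0" using M1(1) i(3) d0 by (simp add: pairing_plus_smul)
        then show ?thesis unfolding R_def using d0 by simp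
      qed
    qed
  next
    assume r: "R w"
    have b0: "\<beta> + smul 0 \<delta> = \<beta>" by (simp add: smul_def prod_eq_iff)
    have bS: "\<beta> \<in> S" using fjS[of 0] n1 b0 by simp
    show "\<exists>l1 l2. l1 \<noteq> l2 \<and> l1 \<in> S \<and> l2 \<in> S \<and> (\<forall>s\<in>S. pairing l1 w \<le> pairing s w) \<and> (\<forall>s\<in>S. pairing l2 w \<le> pairing s w)"
    proof -
      consider (A) "pairing \<delta> w = 0 \<and> pairing \<beta> w \<le> 0" | (B) "pairing \<delta> w \<ge> 0 \<and> pairing \<beta> w = - pairing \<delta> w"
        | (C) "pairing \<delta> w \<le> 0 \<and> pairing \<beta> w = - (of_int n + 1) * pairing \<delta> w" using r unfolding R_def by blast
      then show ?thesis
      proof cases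
        case A
        have "\<beta> \<noteq> \<beta> + smul 1 \<delta>" by (rule ne3) simp
        moreover have "\<beta> + smul 1 \<delta> \<in> S" using fjS[of 1] n1 by simp
        moreover have "\<forall>s\<in>S. pairing \<beta> w \<le> pairing s w"
          by (rule Mn_iff[THEN iffD2]) (use A in simp)
        moreover have "\<forall>s\<in>S. pairing (\<beta> + smul 1 \<delta>) w \<le> pairing s w"
        proof (rule Mn_iff[THEN iffD2])
          have v: "pairing (\<beta> + smul 1 \<delta>) w = pairing \<beta> w"
            using pairing_plus_smul[of \<beta> 1 \<delta> w] A by (simp del: smul_1)
          show "pairing (\<beta> + smul 1 \<delta>) w \<le> - pairing \<delta> w \<and>
            (\<forall>j. 0 \<le> j \<and> j \<le> n \<longrightarrow> pairing (\<beta> + smul 1 \<delta>) w \<le> pairing \<beta> w + of_int j * pairing \<delta> w)"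
            unfolding v using A by simp
        qed
        ultimately show ?thesis using bS by (intro exI[of _ \<beta>] exI[of _ "\<beta> + smul 1 \<delta>"]) (simp only: simp_thms)
      next
        case B
        have "\<forall>s\<in>S. pairing (smul (-1) \<delta>) w \<le> pairing s w"
        proof (rule Mn_iff[THEN iffD2])
          show "pairing (smul (-1) \<delta>) w \<le> - pairing \<delta> w \<and>
            (\<forall>j. 0 \<le> j \<and> j \<le> n \<longrightarrow> pairing (smul (-1) \<delta>) w \<le> pairing \<beta> w + of_int j * pairing \<delta> w)"
            unfolding pairing_uminus_smul
          proof (intro conjI allI impI)
            show "- pairing \<delta> w \<le> - pairing \<delta> w" by simp
            fix j :: int assume "0 \<le> j \<and> j \<le> n"
            then have "of_int j * pairing \<delta> w \<ge> 0" using B by simp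
            then show "- pairing \<delta> w \<le> pairing \<beta> w + of_int j * pairing \<delta> w" using B by linarith
          qed
        qed
        moreover have "\<forall>s\<in>S. pairing \<beta> w \<le> pairing s w"
        proof (rule Mn_iff[THEN iffD2])
          show "pairing \<beta> w \<le> - pairing \<delta> w \<and>
            (\<forall>j. 0 \<le> j \<and> j \<le> n \<longrightarrow> pairing \<beta> w \<le> pairing \<beta> w + of_int j * pairing \<delta> w)"
          proof (intro conjI allI impI)
            show "pairing \<beta> w \<le> - pairing \<delta> w" using B by simp
            fix j :: int assume "0 \<le> j \<and> j \<le> n"
            then have "of_int j * pairing \<delta> w \<ge> 0" using B by simp
            then show "pairing \<beta> w \<le> pairing \<beta> w + of_int j * pairing \<delta> w" by linarith
          qed
        qed
        ultimately show ?thesis using bS apexS ne1 by (intro exI[of _ "smul (-1) \<delta>"] exI[of _ \<beta>]) (simp only: simp_thms)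
      next
        case C
        have m1: "\<forall>s\<in>S. pairing (smul (-1) \<delta>) w \<le> pairing s w"
        proof -
          have "- pairing \<delta> w \<le> pairing \<beta> w + of_int j * pairing \<delta> w" if "0 \<le> j" "j \<le> n" for j
          proof -
            have "(of_int n - of_int j) * pairing \<delta> w \<le> 0" using C that by (simp add: mult_nonneg_nonpos)
            then show ?thesis using C by (simp add: algebra_simps)
          qed
          then show ?thesis by (intro Mn_iff[THEN iffD2]) (simp add: pairing_uminus_smul)
        qed
        have v: "pairing (\<beta> + smul n \<delta>) w = pairing (smul (-1) \<delta>) w"
          using C by (simp add: pairing_plus_smul pairing_uminus_smul algebra_simps)
        have m2: "\<forall>s\<in>S. pairing (\<beta> + smul n \<delta>) w \<le> pairing s w" using m1 v by simp
        have "\<beta> + smul n \<delta> \<in> S" using fjS[of n] n1 by simp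
        then show ?thesis using m1 m2 apexS ne2 by (intro exI[of _ "smul (-1) \<delta>"] exI[of _ "\<beta> + smul n \<delta>"]) (simp only: simp_thms)
      qed
    qed
  qed
  have key2: "R w \<longleftrightarrow> (\<exists>s\<ge>0. w = s *\<^sub>R vec e2 \<or> w = s *\<^sub>R vec d2 \<or> w = s *\<^sub>R vec e1)" for w
  proof
    assume r: "R w"
    consider (A) "pairing \<delta> w = 0 \<and> pairing \<beta> w \<le> 0" | (B) "pairing \<delta> w \<ge> 0 \<and> pairing \<beta> w = - pairing \<delta> w"
      | (C) "pairing \<delta> w \<le> 0 \<and> pairing \<beta> w = - (of_int n + 1) * pairing \<delta> w" using r unfolding R_def by blast
    then show "\<exists>s\<ge>0. w = s *\<^sub>R vec e2 \<or> w = s *\<^sub>R vec d2 \<or> w = s *\<^sub>R vec e1"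
    proof cases
      case A
      define s where "s = - pairing \<beta> w"
      have "w = s *\<^sub>R vec e2"
        by (rule det_inj[OF Dnz]) (use A in \<open>simp_all add: pairing_vec_scale pairing_minus_right pairing_scaleR pairing_vec id3 id4 s_def\<close>)
      moreover have "s \<ge> 0" using A unfolding s_def by simp
      ultimately show ?thesis by blast
    next
      case B
      define s where "s = pairing \<delta> w"
      have "w = s *\<^sub>R vec d2"
        by (rule det_inj[OF Dnz]) (use B in \<open>simp_all add: pairing_vec_scale pairing_minus_right pairing_scaleR pairing_vec id5 id6 s_def\<close>)
      moreover have "s \<ge> 0" using B unfolding s_def by simp
      ultimately show ?thesis by blast
    next
      case C
      define s where "s = - pairing \<delta> w"
      have "w = s *\<^sub>R vec e1"
        by (rule det_inj[OF Dnz]) (use C in \<open>simp_all add: pairing_vec_scale pairing_minus_right pairing_scaleR pairing_vec id1 id2 s_def algebra_simps\<close>)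
      moreover have "s \<ge> 0" using C unfolding s_def by simp
      ultimately show ?thesis by blast
    qed
  next
    assume "\<exists>s\<ge>0. w = s *\<^sub>R vec e2 \<or> w = s *\<^sub>R vec d2 \<or> w = s *\<^sub>R vec e1"
    then obtain s where s: "s \<ge> 0" "w = s *\<^sub>R vec e2 \<or> w = s *\<^sub>R vec d2 \<or> w = s *\<^sub>R vec e1" by blast
    then consider "w = s *\<^sub>R vec e2" | "w = s *\<^sub>R vec d2" | "w = s *\<^sub>R vec e1" by blast
    then show "R w"
    proof cases
      case 1 then show ?thesis unfolding R_def using s(1) by (simp add: pairing_vec_scale id3 id4)
    next
      case 2 then show ?thesis unfolding R_def using s(1) by (simp add: pairing_vec_scale id5 id6)
    next
      case 3 then show ?thesis unfolding R_def using s(1) by (simp add: pairing_vec_scale id1 id2 algebra_simps)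
    qed
  qed
  have bS: "\<beta> \<in> S" using fjS[of 0] n1 by (simp add: add_00)
  have fnS: "\<beta> + smul n \<delta> \<in> S" using fjS[of n] n1 by simp
  have gd: "gcd (fst \<delta>) (snd \<delta>) = 1" by (rule gcd_det[OF dt])
  have dl1: "diff_len \<beta> (\<beta> + smul n \<delta>) = int N"
  proof -
    have "diff_len \<beta> (\<beta> + smul n \<delta>) = gcd (n * fst \<delta>) (n * snd \<delta>)"
      unfolding diff_len_def by (simp add: smul_def)
    also have "\<dots> = \<bar>n\<bar> * gcd (fst \<delta>) (snd \<delta>)" by (simp add: gcd_mult_distrib_int)
    finally show ?thesis using gd nN n1 by simp
  qed
  have dl2: "diff_len (smul (-1) \<delta>) \<beta> = 1"
  proof -
    have "\<bar>det2 (- fst \<delta> - fst \<beta>, - snd \<delta> - snd \<beta>) \<delta>\<bar> = 1" using dt by (simp add: det2_def algebra_simps)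
    from gcd_det[OF this] show ?thesis unfolding diff_len_def by (simp add: smul_def)
  qed
  have dl3: "diff_len (smul (-1) \<delta>) (\<beta> + smul n \<delta>) = 1"
  proof -
    have "\<bar>det2 (- fst \<delta> - (fst \<beta> + n * fst \<delta>), - snd \<delta> - (snd \<beta> + n * snd \<delta>)) \<delta>\<bar> = 1"
      using dt by (simp add: det2_def algebra_simps)
    from gcd_det[OF this] show ?thesis unfolding diff_len_def by (simp add: smul_def)
  qed
  have mnI: "\<forall>s\<in>S. pairing l w \<le> pairing s w"
    if "pairing l w \<le> - pairing \<delta> w" "\<And>j. 0 \<le> j \<Longrightarrow> j \<le> n \<Longrightarrow> pairing l w \<le> pairing \<beta> w + of_int j * pairing \<delta> w" for l w
    by (rule Mn_iff[THEN iffD2]) (use that in blast)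
  have condI: "\<forall>s\<in>S. P s" if "P (smul (-1) \<delta>)" "\<And>j. 0 \<le> j \<Longrightarrow> j \<le> n \<Longrightarrow> P (\<beta> + smul j \<delta>)" for P
  proof
    fix s assume "s \<in> S"
    then have "s = smul (-1) \<delta> \<or> (\<exists>j. 0 \<le> j \<and> j \<le> n \<and> s = \<beta> + smul j \<delta>)" using Sch by blast
    then show "P s" using that by blast
  qed
  define T where "T = tdist \<Phi> p"
  have LOCt': "\<forall>y\<in>ball p \<epsilon>. \<forall>l\<in>S. (\<forall>s\<in>S. pairing l (y-p) \<le> pairing s (y-p)) \<longrightarrow> tdist \<Phi> y = T + pairing l (y-p)"
    using LOCt unfolding T_def .
  have tdf: "\<And>y l. y \<in> ball p \<epsilon> \<Longrightarrow> l \<in> S \<Longrightarrow> (\<forall>s\<in>S. pairing l (y-p) \<le> pairing s (y-p)) \<Longrightarrow> tdist \<Phi> y = T + pairing l (y-p)"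
    using LOCt' by blast
  have P1: "y \<in> caustic \<Phi> \<longleftrightarrow> (\<exists>s\<ge>0. y = p + s *\<^sub>R vec e2 \<or> y = p + s *\<^sub>R vec d2 \<or> y = p + s *\<^sub>R vec e1)"
    if y: "y \<in> ball p \<epsilon>" for y
  proof -
    have yi: "y \<in> interior \<Phi>" using y ballsub by blast
    have "y \<in> caustic \<Phi> \<longleftrightarrow> (\<exists>l1 l2. l1 \<noteq> l2 \<and> attains \<Phi> y l1 \<and> attains \<Phi> y l2)"
      unfolding caustic_def using yi by simp
    also have "\<dots> \<longleftrightarrow> (\<exists>l1 l2. l1 \<noteq> l2 \<and> l1 \<in> S \<and> l2 \<in> S \<and> (\<forall>s\<in>S. pairing l1 (y-p) \<le> pairing s (y-p))
                   \<and> (\<forall>s\<in>S. pairing l2 (y-p) \<le> pairing s (y-p)))"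
    proof -
      have att: "\<And>l. attains \<Phi> y l \<longleftrightarrow> l \<in> S \<and> (\<forall>s\<in>S. pairing l (y-p) \<le> pairing s (y-p))"
        using LOCa y by blast
      show ?thesis unfolding att
      proof
        assume "\<exists>l1 l2. l1 \<noteq> l2 \<and> (l1 \<in> S \<and> (\<forall>s\<in>S. pairing l1 (y-p) \<le> pairing s (y-p))) \<and> (l2 \<in> S \<and> (\<forall>s\<in>S. pairing l2 (y-p) \<le> pairing s (y-p)))"
        then obtain l1 l2 where "l1 \<noteq> l2" "l1 \<in> S" "\<forall>s\<in>S. pairing l1 (y-p) \<le> pairing s (y-p)" "l2 \<in> S" "\<forall>s\<in>S. pairing l2 (y-p) \<le> pairing s (y-p)"
          by blast
        then show "\<exists>l1 l2. l1 \<noteq> l2 \<and> l1 \<in> S \<and> l2 \<in> S \<and> (\<forall>s\<in>S. pairing l1 (y-p) \<le> pairing s (y-p)) \<and> (\<forall>s\<in>S. pairing l2 (y-p) \<le> pairing s (y-p))"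
          by (intro exI[of _ l1] exI[of _ l2]) (simp only: simp_thms)
      next
        assume "\<exists>l1 l2. l1 \<noteq> l2 \<and> l1 \<in> S \<and> l2 \<in> S \<and> (\<forall>s\<in>S. pairing l1 (y-p) \<le> pairing s (y-p)) \<and> (\<forall>s\<in>S. pairing l2 (y-p) \<le> pairing s (y-p))"
        then obtain l1 l2 where "l1 \<noteq> l2" "l1 \<in> S" "\<forall>s\<in>S. pairing l1 (y-p) \<le> pairing s (y-p)" "l2 \<in> S" "\<forall>s\<in>S. pairing l2 (y-p) \<le> pairing s (y-p)"
          by blast
        then show "\<exists>l1 l2. l1 \<noteq> l2 \<and> (l1 \<in> S \<and> (\<forall>s\<in>S. pairing l1 (y-p) \<le> pairing s (y-p))) \<and> (l2 \<in> S \<and> (\<forall>s\<in>S. pairing l2 (y-p) \<le> pairing s (y-p)))"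
          by (intro exI[of _ l1] exI[of _ l2]) (simp only: simp_thms)
      qed
    qed
    also have "\<dots> \<longleftrightarrow> R (y - p)" by (rule key1)
    also have "\<dots> \<longleftrightarrow> (\<exists>s\<ge>0. y - p = s *\<^sub>R vec e2 \<or> y - p = s *\<^sub>R vec d2 \<or> y - p = s *\<^sub>R vec e1)" by (rule key2)
    also have "\<dots> \<longleftrightarrow> (\<exists>s\<ge>0. y = p + s *\<^sub>R vec e2 \<or> y = p + s *\<^sub>R vec d2 \<or> y = p + s *\<^sub>R vec e1)"
      by (simp add: algebra_simps)
    finally show ?thesis .
  qed
  have P2: "edge_weight \<Phi> (p + s *\<^sub>R vec e2) (int N) \<and> tdist \<Phi> (p + s *\<^sub>R vec e2) < tdist \<Phi> p"
    if s: "s > 0" "p + s *\<^sub>R vec e2 \<in> ball p \<epsilon>" for s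
  proof -
    define y where "y = p + s *\<^sub>R vec e2"
    have yb: "y \<in> ball p \<epsilon>" using s(2) unfolding y_def .
    have D: "pairing \<delta> (y - p) = 0" "pairing \<beta> (y - p) = - s"
      unfolding y_def by (simp_all add: pairing_vec_scale id3 id4)
    have mn: "\<forall>s\<in>S. pairing \<beta> (y-p) \<le> pairing s (y-p)" by (rule mnI) (use D s in simp_all)
    have td: "tdist \<Phi> y = T - s" using tdf[OF yb bS mn] D by simp
    have eq: "pairing (\<beta> + smul n \<delta>) (y-p) = pairing \<beta> (y-p)" using D by (simp add: pairing_plus_smul)
    have cond: "\<forall>s'\<in>S. pairing s' (y-p) > pairing \<beta> (y-p) \<or>
        (\<forall>u. min (pairing \<beta> u) (pairing (\<beta> + smul n \<delta>) u) \<le> pairing s' u)"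
    proof (rule condI)
      show "pairing (smul (-1) \<delta>) (y-p) > pairing \<beta> (y-p) \<or>
        (\<forall>u. min (pairing \<beta> u) (pairing (\<beta> + smul n \<delta>) u) \<le> pairing (smul (-1) \<delta>) u)"
        using D s by (simp add: pairing_uminus_smul)
    next
      fix j assume j: "0 \<le> j" "j \<le> n"
      have "min (pairing \<beta> u) (pairing (\<beta> + smul n \<delta>) u) \<le> pairing (\<beta> + smul j \<delta>) u" for u
      proof (cases "pairing \<delta> u \<ge> 0")
        case True
        then have "of_int j * pairing \<delta> u \<ge> 0" using j by simp
        then show ?thesis by (simp add: pairing_plus_smul min_le_iff_disj)
      next
        case False
        have "(of_int n - of_int j) * pairing \<delta> u \<le> 0" using False j by (simp add: mult_nonneg_nonpos)
        then have "of_int n * pairing \<delta> u \<le> of_int j * pairing \<delta> u" by (simp add: algebra_simps)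
        then show ?thesis by (simp add: pairing_plus_smul min_le_iff_disj)
      qed
      then show "pairing (\<beta> + smul j \<delta>) (y-p) > pairing \<beta> (y-p) \<or>
        (\<forall>u. min (pairing \<beta> u) (pairing (\<beta> + smul n \<delta>) u) \<le> pairing (\<beta> + smul j \<delta>) u)" by blast
    qed
    have EWr: "\<exists>\<delta>'>0. \<forall>z\<in>ball y \<delta>'. tdist \<Phi> z = tdist \<Phi> y + min (pairing \<beta> (z-y)) (pairing (\<beta> + smul n \<delta>) (z-y))"
      by (rule EW[OF fS LOCt' yb bS fnS mn eq cond])
    have "edge_weight \<Phi> y (int N)" unfolding edge_weight_def
      apply (rule exI[of _ \<beta>], rule exI[of _ "\<beta> + smul n \<delta>"], intro conjI)
      subgoal by (rule ne3) (use n1 in simp)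
      subgoal by (rule dl1)
      subgoal by (rule EWr)
      done
    then show ?thesis using td s unfolding y_def T_def by simp
  qed
  have P3: "edge_weight \<Phi> (p + s *\<^sub>R vec d2) 1 \<and> tdist \<Phi> (p + s *\<^sub>R vec d2) < tdist \<Phi> p"
    if s: "s > 0" "p + s *\<^sub>R vec d2 \<in> ball p \<epsilon>" for s
  proof -
    define y where "y = p + s *\<^sub>R vec d2"
    have yb: "y \<in> ball p \<epsilon>" using s(2) unfolding y_def .
    have D: "pairing \<delta> (y - p) = s" "pairing \<beta> (y - p) = - s"
      unfolding y_def by (simp_all add: pairing_vec_scale id5 id6)
    have mn: "\<forall>s\<in>S. pairing (smul (-1) \<delta>) (y-p) \<le> pairing s (y-p)"
    proof (rule mnI)
      show "pairing (smul (-1) \<delta>) (y - p) \<le> - pairing \<delta> (y - p)" by (simp add: pairing_uminus_smul)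
      fix j :: int assume "0 \<le> j" "j \<le> n"
      then have "of_int j * s \<ge> 0" using s by simp
      then show "pairing (smul (-1) \<delta>) (y - p) \<le> pairing \<beta> (y - p) + of_int j * pairing \<delta> (y - p)"
        using D by (simp add: pairing_uminus_smul)
    qed
    have td: "tdist \<Phi> y = T - s" using tdf[OF yb apexS mn] D by (simp add: pairing_uminus_smul)
    have eq: "pairing \<beta> (y-p) = pairing (smul (-1) \<delta>) (y-p)" using D by (simp add: pairing_uminus_smul)
    have cond: "\<forall>s'\<in>S. pairing s' (y-p) > pairing (smul (-1) \<delta>) (y-p) \<or>
        (\<forall>u. min (pairing (smul (-1) \<delta>) u) (pairing \<beta> u) \<le> pairing s' u)"
    proof (rule condI)
      show "pairing (smul (-1) \<delta>) (y-p) > pairing (smul (-1) \<delta>) (y-p) \<or>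
        (\<forall>u. min (pairing (smul (-1) \<delta>) u) (pairing \<beta> u) \<le> pairing (smul (-1) \<delta>) u)"
        by (simp add: min_le_iff_disj)
    next
      fix j assume j: "0 \<le> j" "j \<le> n"
      show "pairing (\<beta> + smul j \<delta>) (y-p) > pairing (smul (-1) \<delta>) (y-p) \<or>
        (\<forall>u. min (pairing (smul (-1) \<delta>) u) (pairing \<beta> u) \<le> pairing (\<beta> + smul j \<delta>) u)"
      proof (cases "j = 0")
        case True then show ?thesis by (simp add: min_le_iff_disj add_00)
      next
        case False
        then have "of_int j * s > 0" using j s by simp
        then show ?thesis using D by (simp add: pairing_plus_smul pairing_uminus_smul)
      qed
    qed
    have EWr: "\<exists>\<delta>'>0. \<forall>z\<in>ball y \<delta>'. tdist \<Phi> z = tdist \<Phi> y + min (pairing (smul (-1) \<delta>) (z-y)) (pairing \<beta> (z-y))"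
      by (rule EW[OF fS LOCt' yb apexS bS mn eq cond])
    have "edge_weight \<Phi> y 1" unfolding edge_weight_def
      apply (rule exI[of _ "smul (-1) \<delta>"], rule exI[of _ \<beta>], intro conjI)
      subgoal by (rule ne1)
      subgoal by (rule dl2)
      subgoal by (rule EWr)
      done
    then show ?thesis using td s unfolding y_def T_def by simp
  qed
  have P4: "edge_weight \<Phi> (p + s *\<^sub>R vec e1) 1 \<and> tdist \<Phi> (p + s *\<^sub>R vec e1) > tdist \<Phi> p"
    if s: "s > 0" "p + s *\<^sub>R vec e1 \<in> ball p \<epsilon>" for s
  proof -
    define y where "y = p + s *\<^sub>R vec e1"
    have yb: "y \<in> ball p \<epsilon>" using s(2) unfolding y_def .
    have D: "pairing \<delta> (y - p) = - s" "pairing \<beta> (y - p) = (of_int n + 1) * s"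
      unfolding y_def by (simp_all add: pairing_vec_scale id1 id2)
    have mn: "\<forall>s\<in>S. pairing (smul (-1) \<delta>) (y-p) \<le> pairing s (y-p)"
    proof (rule mnI)
      show "pairing (smul (-1) \<delta>) (y - p) \<le> - pairing \<delta> (y - p)" by (simp add: pairing_uminus_smul)
      fix j :: int assume "0 \<le> j" "j \<le> n"
      then have "(of_int n - of_int j) * s \<ge> 0" using s by simp
      then show "pairing (smul (-1) \<delta>) (y - p) \<le> pairing \<beta> (y - p) + of_int j * pairing \<delta> (y - p)"
        using D by (simp add: pairing_uminus_smul algebra_simps)
    qed
    have td: "tdist \<Phi> y = T + s" using tdf[OF yb apexS mn] D by (simp add: pairing_uminus_smul)
    have eq: "pairing (\<beta> + smul n \<delta>) (y-p) = pairing (smul (-1) \<delta>) (y-p)"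
      using D by (simp add: pairing_uminus_smul pairing_plus_smul algebra_simps)
    have cond: "\<forall>s'\<in>S. pairing s' (y-p) > pairing (smul (-1) \<delta>) (y-p) \<or>
        (\<forall>u. min (pairing (smul (-1) \<delta>) u) (pairing (\<beta> + smul n \<delta>) u) \<le> pairing s' u)"
    proof (rule condI)
      show "pairing (smul (-1) \<delta>) (y-p) > pairing (smul (-1) \<delta>) (y-p) \<or>
        (\<forall>u. min (pairing (smul (-1) \<delta>) u) (pairing (\<beta> + smul n \<delta>) u) \<le> pairing (smul (-1) \<delta>) u)"
        by (simp add: min_le_iff_disj)
    next
      fix j assume j: "0 \<le> j" "j \<le> n"
      show "pairing (\<beta> + smul j \<delta>) (y-p) > pairing (smul (-1) \<delta>) (y-p) \<or>
        (\<forall>u. min (pairing (smul (-1) \<delta>) u) (pairing (\<beta> + smul n \<delta>) u) \<le> pairing (\<beta> + smul j \<delta>) u)"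
      proof (cases "j = n")
        case True then show ?thesis by (simp add: min_le_iff_disj)
      next
        case False
        then have "(of_int n - of_int j) * s > 0" using j s by simp
        then show ?thesis using D by (simp add: pairing_plus_smul pairing_uminus_smul algebra_simps)
      qed
    qed
    have EWr: "\<exists>\<delta>'>0. \<forall>z\<in>ball y \<delta>'. tdist \<Phi> z = tdist \<Phi> y + min (pairing (smul (-1) \<delta>) (z-y)) (pairing (\<beta> + smul n \<delta>) (z-y))"
      by (rule EW[OF fS LOCt' yb apexS fnS mn eq cond])
    have "edge_weight \<Phi> y 1" unfolding edge_weight_def
      apply (rule exI[of _ "smul (-1) \<delta>"], rule exI[of _ "\<beta> + smul n \<delta>"], intro conjI)
      subgoal by (rule ne2)
      subgoal by (rule dl3)
      subgoal by (rule EWr)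
      done
    then show ?thesis using td s unfolding y_def T_def by simp
  qed
  have N1: "N \<ge> 1" using n1 unfolding N_def by simp
  have fin: "\<exists>\<epsilon>>0. (\<forall>y\<in>ball p \<epsilon>. y \<in> caustic \<Phi> \<longleftrightarrow>
            (\<exists>s\<ge>0. y = p + s *\<^sub>R vec e2 \<or> y = p + s *\<^sub>R vec d2 \<or> y = p + s *\<^sub>R vec e1)) \<and>
        (\<forall>s>0. p + s *\<^sub>R vec e2 \<in> ball p \<epsilon> \<longrightarrow>
            edge_weight \<Phi> (p + s *\<^sub>R vec e2) (int N) \<and> tdist \<Phi> (p + s *\<^sub>R vec e2) < tdist \<Phi> p) \<and>
        (\<forall>s>0. p + s *\<^sub>R vec d2 \<in> ball p \<epsilon> \<longrightarrow>
            edge_weight \<Phi> (p + s *\<^sub>R vec d2) 1 \<and> tdist \<Phi> (p + s *\<^sub>R vec d2) < tdist \<Phi> p) \<and>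
        (\<forall>s>0. p + s *\<^sub>R vec e1 \<in> ball p \<epsilon> \<longrightarrow>
            edge_weight \<Phi> (p + s *\<^sub>R vec e1) 1 \<and> tdist \<Phi> (p + s *\<^sub>R vec e1) > tdist \<Phi> p)"
  proof (intro exI[of _ \<epsilon>] conjI)
    show "\<epsilon> > 0" by (rule \<epsilon>pos)
  next
    show "\<forall>y\<in>ball p \<epsilon>. y \<in> caustic \<Phi> \<longleftrightarrow>
            (\<exists>s\<ge>0. y = p + s *\<^sub>R vec e2 \<or> y = p + s *\<^sub>R vec d2 \<or> y = p + s *\<^sub>R vec e1)"
      using P1 by (rule ballI)
  next
    show "\<forall>s>0. p + s *\<^sub>R vec e2 \<in> ball p \<epsilon> \<longrightarrow>
            edge_weight \<Phi> (p + s *\<^sub>R vec e2) (int N) \<and> tdist \<Phi> (p + s *\<^sub>R vec e2) < tdist \<Phi> p"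
      using P2 by (intro allI impI)
  next
    show "\<forall>s>0. p + s *\<^sub>R vec d2 \<in> ball p \<epsilon> \<longrightarrow>
            edge_weight \<Phi> (p + s *\<^sub>R vec d2) 1 \<and> tdist \<Phi> (p + s *\<^sub>R vec d2) < tdist \<Phi> p"
      using P3 by (intro allI impI)
  next
    show "\<forall>s>0. p + s *\<^sub>R vec e1 \<in> ball p \<epsilon> \<longrightarrow>
            edge_weight \<Phi> (p + s *\<^sub>R vec e1) 1 \<and> tdist \<Phi> (p + s *\<^sub>R vec e1) > tdist \<Phi> p"
      using P4 by (intro allI impI)
  qed
  show ?thesis unfolding Let_def
    apply (rule exI[of _ N], rule exI[of _ e1], rule exI[of _ e2])
    by (intro conjI N1 lb fin[unfolded d2_def])
qed

theorem theorem3p1: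
  fixes \<Phi> :: "(real \<times> real) set" and p :: "real \<times> real"
  assumes "compact \<Phi>" and "convex \<Phi>" and "interior \<Phi> \<noteq> {}"
    and "caustic_vertex \<Phi> p"
    and "0 < tdist \<Phi> p" and "tdist \<Phi> p < final_time \<Phi>"
  shows "\<exists>(n::nat) (e1::int \<times> int) (e2::int \<times> int). n \<ge> 1 \<and> lattice_basis e1 e2 \<and>
    (let d1 = e2;
         d2 = (- fst e1 - int n * fst e2, - snd e1 - int n * snd e2);
         d3 = e1
     in \<exists>\<epsilon>>0.
        (\<forall>y\<in>ball p \<epsilon>. y \<in> caustic \<Phi> \<longleftrightarrow>
            (\<exists>s\<ge>0. y = p + s *\<^sub>R vec d1 \<or> y = p + s *\<^sub>R vec d2 \<or> y = p + s *\<^sub>R vec d3)) \<and>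
        (\<forall>s>0. p + s *\<^sub>R vec d1 \<in> ball p \<epsilon> \<longrightarrow>
            edge_weight \<Phi> (p + s *\<^sub>R vec d1) (int n) \<and>
            tdist \<Phi> (p + s *\<^sub>R vec d1) < tdist \<Phi> p) \<and>
        (\<forall>s>0. p + s *\<^sub>R vec d2 \<in> ball p \<epsilon> \<longrightarrow>
            edge_weight \<Phi> (p + s *\<^sub>R vec d2) 1 \<and>
            tdist \<Phi> (p + s *\<^sub>R vec d2) < tdist \<Phi> p) \<and>
        (\<forall>s>0. p + s *\<^sub>R vec d3 \<in> ball p \<epsilon> \<longrightarrow>
            edge_weight \<Phi> (p + s *\<^sub>R vec d3) 1 \<and>
            tdist \<Phi> (p + s *\<^sub>R vec d3) > tdist \<Phi> p))"
proof -
  note cpt = assms(1)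
  have pc: "p \<in> caustic \<Phi>" using assms(4) unfolding caustic_vertex_def by blast
  then have pint: "p \<in> interior \<Phi>" unfolding caustic_def by blast
  obtain l1 l2 where l12: "l1 \<noteq> l2" "attains \<Phi> p l1" "attains \<Phi> p l2"
    using pc unfolding caustic_def by blast
  have pPhi: "p \<in> \<Phi>" using pint interior_subset by blast
  have Phine: "\<Phi> \<noteq> {}" using pPhi by blast
  define T where "T = tdist \<Phi> p"
  define S where "S = {l. l \<noteq> (0,0) \<and> G \<Phi> p l = T}"
  have loc: "finite S \<and> S \<noteq> {} \<and> (\<exists>\<epsilon>>0. ball p \<epsilon> \<subseteq> interior \<Phi> \<and>
     (\<forall>y\<in>ball p \<epsilon>. (\<forall>l. attains \<Phi> y l \<longleftrightarrow> l \<in> S \<and> (\<forall>s\<in>S. pairing l (y-p) \<le> pairing s (y-p))) \<and>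
        (\<forall>l\<in>S. (\<forall>s\<in>S. pairing l (y-p) \<le> pairing s (y-p)) \<longrightarrow> tdist \<Phi> y = T + pairing l (y-p))))"
    unfolding S_def T_def by (rule LOC[OF cpt pint])
  then have finS: "finite S" by blast
  from loc obtain \<epsilon> where \<epsilon>: "\<epsilon> > 0" "ball p \<epsilon> \<subseteq> interior \<Phi>"
    and LOCy: "\<forall>y\<in>ball p \<epsilon>. (\<forall>l. attains \<Phi> y l \<longleftrightarrow> l \<in> S \<and> (\<forall>s\<in>S. pairing l (y-p) \<le> pairing s (y-p))) \<and>
        (\<forall>l\<in>S. (\<forall>s\<in>S. pairing l (y-p) \<le> pairing s (y-p)) \<longrightarrow> tdist \<Phi> y = T + pairing l (y-p))"
    by blast
  have LOCa: "\<forall>y\<in>ball p \<epsilon>. \<forall>l. attains \<Phi> y l \<longleftrightarrow> l \<in> S \<and> (\<forall>s\<in>S. pairing l (y-p) \<le> pairing s (y-p))"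
    using LOCy by blast
  have LOCt: "\<forall>y\<in>ball p \<epsilon>. \<forall>l\<in>S. (\<forall>s\<in>S. pairing l (y-p) \<le> pairing s (y-p)) \<longrightarrow> tdist \<Phi> y = tdist \<Phi> p + pairing l (y-p)"
    using LOCy unfolding T_def by blast
  have l1S: "l1 \<in> S" "l2 \<in> S" using l12 unfolding S_def T_def attains_G by auto
  obtain q where q: "q \<in> \<Phi>" "tdist \<Phi> q > T"
  proof -
    have "T < Sup (tdist \<Phi> ` \<Phi>)" using assms(6) unfolding T_def final_time_def .
    then obtain x where "x \<in> tdist \<Phi> ` \<Phi>" "T < x" using less_cSupD[of "tdist \<Phi> ` \<Phi>" T] Phine by blast
    then show ?thesis using that by blast
  qed
  define v where "v = q - p"
  have half: "pairing s v > 0" if "s \<in> {l. l \<noteq> (0,0) \<and> G \<Phi> p l = T}" for s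
  proof -
    have s: "s \<noteq> (0,0)" "G \<Phi> p s = T" using that by auto
    have "tdist \<Phi> q \<le> G \<Phi> q s" by (rule tdist_le[OF cpt q(1) s(1)])
    also have "\<dots> = T + pairing s v" unfolding v_def using G_shift[of \<Phi> q s p] s(2) by simp
    finally show ?thesis using q(2) by simp
  qed
  have G2: "G \<Phi> p (a + b) \<le> G \<Phi> p a + G \<Phi> p b" for a b
  proof -
    obtain q where q: "q \<in> \<Phi>" "supp \<Phi> (a+b) = pairing (a+b) q"
      using supp_attained[OF cpt Phine, of "a+b"] by blast
    have "supp \<Phi> a \<le> pairing a q" "supp \<Phi> b \<le> pairing b q" using supp_le[OF cpt q(1)] by auto
    then show ?thesis unfolding G_def q(2) pairing_add_left by simp
  qed
  have G3: "of_int k * G \<Phi> p l \<le> G \<Phi> p (smul k l)" if "k \<ge> 0" for k l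
  proof -
    obtain q where q: "q \<in> \<Phi>" "supp \<Phi> l = pairing l q"
      using supp_attained[OF cpt Phine, of l] by blast
    have "supp \<Phi> (smul k l) \<le> pairing (smul k l) q" by (rule supp_le[OF cpt q(1)])
    then have "supp \<Phi> (smul k l) \<le> of_int k * supp \<Phi> l" unfolding q(2) pairing_smul .
    then show ?thesis unfolding G_def pairing_smul by (simp add: algebra_simps)
  qed
  have g0: "G \<Phi> p (0,0) = 0"
  proof -
    obtain q where q: "q \<in> \<Phi>" "supp \<Phi> (0,0) = pairing (0,0) q"
      using supp_attained[OF cpt Phine, of "(0,0)"] by blast
    then show ?thesis unfolding G_def by (simp add: pairing_zero)
  qed
  have G1: "T \<le> G \<Phi> p l" if "l \<noteq> (0,0)" for l unfolding T_def by (rule tdist_le[OF cpt pPhi that])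
  interpret L: lat "G \<Phi> p" T v
  proof
    show "\<And>l. l \<noteq> (0,0) \<Longrightarrow> T \<le> G \<Phi> p l" by (rule G1)
    show "\<And>a b. G \<Phi> p (a + b) \<le> G \<Phi> p a + G \<Phi> p b" by (rule G2)
    show "\<And>k l. 0 \<le> k \<Longrightarrow> of_int k * G \<Phi> p l \<le> G \<Phi> p (smul k l)" by (rule G3)
    show "G \<Phi> p (0,0) = 0" by (rule g0)
    show "T > 0" using assms(5) unfolding T_def .
    show "finite {l. l \<noteq> (0,0) \<and> G \<Phi> p l = T}" using finS unfolding S_def .
    show "\<And>s. s \<in> {l. l \<noteq> (0,0) \<and> G \<Phi> p l = T} \<Longrightarrow> pairing s v > 0" by (rule half)
  qed
  have SS: "L.S = S" unfolding L.S_def S_def ..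
  obtain a b where ab: "a \<in> L.S" "b \<in> L.S" "det2 a b = 1"
    "\<And>s. s \<in> L.S \<Longrightarrow> s \<noteq> a \<Longrightarrow> s \<noteq> b \<Longrightarrow> det2 a s > 0 \<and> det2 b s > 0"
    using L.exists_ab[of l1 l2] l1S l12(1) unfolding SS by blast
  have cls: "(\<exists>base u m. u \<noteq> (0,0) \<and> m \<ge> 1 \<and> (\<forall>l. l \<in> S \<longleftrightarrow> (\<exists>k. 0 \<le> k \<and> k \<le> m \<and> l = base + smul k u)))
       \<or> (\<exists>\<delta> \<beta> n. n \<ge> 1 \<and> \<bar>det2 \<delta> \<beta>\<bar> = 1 \<and>
            (\<forall>l. l \<in> S \<longleftrightarrow> (l = smul (-1) \<delta> \<or> (\<exists>j. 0 \<le> j \<and> j \<le> n \<and> l = \<beta> + smul j \<delta>))))"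
    using L.classify[OF ab] unfolding SS .
  show ?thesis
  proof (cases "\<exists>base u m. u \<noteq> (0,0) \<and> m \<ge> 1 \<and> (\<forall>l. l \<in> S \<longleftrightarrow> (\<exists>k. 0 \<le> k \<and> k \<le> m \<and> l = base + smul k u))")
    case True
    then obtain base u m where u: "u \<noteq> (0,0)" "m \<ge> 1"
      and Sc: "\<forall>l. l \<in> S \<longleftrightarrow> (\<exists>k. 0 \<le> k \<and> k \<le> m \<and> l = base + smul k u)" by blast
    have Sc': "l \<in> S \<longleftrightarrow> (\<exists>k. 0 \<le> k \<and> k \<le> m \<and> l = base + smul k u)" for l
      using Sc by (rule spec)
    define d where "d = vec (- snd u, fst u)"
    have dnz: "d \<noteq> 0" using u(1) unfolding d_def vec_def by (cases u) (auto simp: zero_prod_def)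
    have pv: "pairing (base + smul k u) w = pairing base w + of_int k * pairing u w" for k w
      by (simp add: pairing_plus_smul)
    have cz: "y \<in> caustic \<Phi> \<longleftrightarrow> pairing u (y - p) = 0" if y: "y \<in> ball p \<epsilon>" for y
    proof -
      have yi: "y \<in> interior \<Phi>" using y \<epsilon>(2) by blast
      have att: "\<And>l. attains \<Phi> y l \<longleftrightarrow> l \<in> S \<and> (\<forall>s\<in>S. pairing l (y-p) \<le> pairing s (y-p))"
        using LOCa y by blast
      show ?thesis
      proof
        assume "y \<in> caustic \<Phi>"
        then obtain k1 k2 where k: "k1 \<noteq> k2" and m1: "\<forall>s\<in>S. pairing (base + smul k1 u) (y-p) \<le> pairing s (y-p)"
          and m2: "\<forall>s\<in>S. pairing (base + smul k2 u) (y-p) \<le> pairing s (y-p)"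
          and k1S: "base + smul k1 u \<in> S" and k2S: "base + smul k2 u \<in> S"
        proof -
          assume r: "\<And>k1 k2. k1 \<noteq> k2 \<Longrightarrow> \<forall>s\<in>S. pairing (base + smul k1 u) (y-p) \<le> pairing s (y-p) \<Longrightarrow>
            \<forall>s\<in>S. pairing (base + smul k2 u) (y-p) \<le> pairing s (y-p) \<Longrightarrow> base + smul k1 u \<in> S \<Longrightarrow> base + smul k2 u \<in> S \<Longrightarrow> thesis"
          obtain l1 l2 where "l1 \<noteq> l2" "attains \<Phi> y l1" "attains \<Phi> y l2" using \<open>y \<in> caustic \<Phi>\<close> unfolding caustic_def by blast
          then have h: "l1 \<noteq> l2" "l1 \<in> S" "l2 \<in> S" "\<forall>s\<in>S. pairing l1 (y-p) \<le> pairing s (y-p)" "\<forall>s\<in>S. pairing l2 (y-p) \<le> pairing s (y-p)"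
            using att[of l1] att[of l2] by blast+
          obtain k1 where k1: "l1 = base + smul k1 u" using Sc'[THEN iffD1, OF h(2)] by (elim exE conjE)
          obtain k2 where k2: "l2 = base + smul k2 u" using Sc'[THEN iffD1, OF h(3)] by (elim exE conjE)
          have "k1 \<noteq> k2" using h(1) k1 k2 by auto
          then show thesis by (rule r) (use h k1 k2 in simp_all)
        qed
        have "pairing (base + smul k1 u) (y-p) = pairing (base + smul k2 u) (y-p)"
          using bspec[OF m1 k2S] bspec[OF m2 k1S] by (rule order_antisym)
        then have "(of_int k1 - of_int k2) * pairing u (y-p) = 0" unfolding pv by (simp add: algebra_simps)
        then show "pairing u (y - p) = 0" using k by simp
      next
        assume h: "pairing u (y - p) = 0"
        have "\<exists>k. 0 \<le> k \<and> k \<le> m \<and> base + smul 0 u = base + smul k u" using u(2) by (intro exI[of _ 0]) simp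
        then have "base + smul 0 u \<in> S" by (rule Sc'[THEN iffD2])
        then have bS: "base \<in> S" by (simp add: add_00)
        have "\<exists>k. 0 \<le> k \<and> k \<le> m \<and> base + smul 1 u = base + smul k u" using u(2) by (intro exI[of _ 1]) simp
        then have b1S: "base + smul 1 u \<in> S" by (rule Sc'[THEN iffD2])
        have allv: "pairing s (y-p) = pairing base (y-p)" if sS: "s \<in> S" for s
        proof -
          obtain k where "s = base + smul k u" using Sc'[THEN iffD1, OF sS] by (elim exE conjE)
          then show ?thesis using h pv by simp
        qed
        have ne: "base \<noteq> base + smul 1 u" using u(1) by (cases u) (auto simp: prod_eq_iff)
        have A1: "attains \<Phi> y base"
        proof (rule att[THEN iffD2], intro conjI bS ballI)
          fix s assume "s \<in> S"
          then show "pairing base (y-p) \<le> pairing s (y-p)" using allv[of s] by linarith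
        qed
        have A2: "attains \<Phi> y (base + smul 1 u)"
        proof (rule att[THEN iffD2], intro conjI b1S ballI)
          fix s assume "s \<in> S"
          then show "pairing (base + smul 1 u) (y-p) \<le> pairing s (y-p)" using allv[of s] allv[OF b1S] by linarith
        qed
        have "\<exists>l1 l2. l1 \<noteq> l2 \<and> attains \<Phi> y l1 \<and> attains \<Phi> y l2" using ne A1 A2 by blast
        then show "y \<in> caustic \<Phi>" unfolding caustic_def using yi by simp
      qed
    qed
    have "caustic \<Phi> \<inter> ball p \<epsilon> = {p + s *\<^sub>R d | s. True} \<inter> ball p \<epsilon>"
    proof (rule set_eqI)
      fix y
      show "y \<in> caustic \<Phi> \<inter> ball p \<epsilon> \<longleftrightarrow> y \<in> {p + s *\<^sub>R d | s. True} \<inter> ball p \<epsilon>"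
      proof (cases "y \<in> ball p \<epsilon>")
        case True
        have "y \<in> caustic \<Phi> \<longleftrightarrow> (\<exists>s. y - p = s *\<^sub>R d)" unfolding cz[OF True] d_def by (rule perp_line[OF u(1)])
        also have "\<dots> \<longleftrightarrow> y \<in> {p + s *\<^sub>R d | s. True}"
        proof -
          have e: "\<And>x. (y - p = x) \<longleftrightarrow> (y = p + x)" by (auto simp: algebra_simps)
          show ?thesis by (simp add: e)
        qed
        finally have calc: "y \<in> caustic \<Phi> \<longleftrightarrow> y \<in> {p + s *\<^sub>R d | s. True}" .
        show ?thesis by (simp only: Int_iff calc True simp_thms)
      next
        case False then show ?thesis by (simp only: Int_iff False simp_thms)
      qed
    qed
    then have ex: "\<exists>\<epsilon>>0. \<exists>d::real \<times> real. d \<noteq> 0 \<and>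
            caustic \<Phi> \<inter> ball p \<epsilon> = {p + s *\<^sub>R d | s. True} \<inter> ball p \<epsilon>"
      using \<epsilon>(1) dnz by (intro exI[of _ \<epsilon>] conjI exI[of _ d])
    have nv: "\<not> (\<exists>\<epsilon>>0. \<exists>d::real \<times> real. d \<noteq> 0 \<and>
            caustic \<Phi> \<inter> ball p \<epsilon> = {p + s *\<^sub>R d | s. True} \<inter> ball p \<epsilon>)"
      using assms(4) unfolding caustic_vertex_def by (rule conjunct2)
    from nv ex show ?thesis by (rule notE)
  next
    case False
    then obtain \<delta> \<beta> n where n: "n \<ge> 1" "\<bar>det2 \<delta> \<beta>\<bar> = 1"
      and Sch: "\<forall>l. l \<in> S \<longleftrightarrow> (l = smul (-1) \<delta> \<or> (\<exists>j. 0 \<le> j \<and> j \<le> n \<and> l = \<beta> + smul j \<delta>))"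
      using cls by blast
    show ?thesis by (rule A_case[OF \<epsilon> finS LOCa LOCt n Sch])
  qed
qed

end
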